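(* Let $m,n\geq 2$ be integers with $m\mid n$. Let $E_n=(A^{(n)}\#C_n)/(e_0)$ and $E_m=(A^{(m)}\#C_m)/(e_0)$. Then $\operatorname{GKdim}E_n\geq\operatorname{GKdim}E_m$; equivalently $n-\mathrm{p}(A^{(n)},C_n)\geq m-\mathrm{p}(A^{(m)},C_m)$.
   Context: $\Bbbk$ is an algebraically closed field of characteristic zero. For $k\ge2$, $A^{(k)}=\Bbbk_{-1}[x_0,\dots,x_{k-1}]$ is the algebra generated by degree-one $x_0,\dots,x_{k-1}$ with $x_ix_j=-x_jx_i$ ($i\ne j$), with the cyclic group $C_k=\langle\sigma\rangle$ acting by $\sigma(x_i)=x_{i+1}$ (indices in $\mathbb{Z}_k$). In the skew group algebra $A^{(k)}\#C_k$, $e_0=1\#\frac1k\sum_{g\in C_k}g$ and $(e_0)$ is the two-sided ideal it generates; $\mathrm{p}(A^{(k)},C_k)=k-\operatorname{GKdim}\big((A^{(k)}\#C_k)/(e_0)\big)$. *)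

theory Defs
  imports "HOL-Library.Extended_Real" "HOL-Library.Liminf_Limsup"
          "HOL-Computational_Algebra.Polynomial"
begin

text \<open>Concrete model of the skew group algebra A^(k) # C_k, where
  A^(k) = k_{-1}[x_0,...,x_{k-1}].  A basis element (a, g) stands for
  x_0^(a 0) x_1^(a 1) ... x_(k-1)^(a (k-1)) # sigma^g  (standard ordered monomial),
  with a supported on {..<k} and g < k.\<close>

type_synonym mon = "(nat \<Rightarrow> nat) \<times> nat"

definition Bk :: "nat \<Rightarrow> mon set" where
  "Bk k = {(a, g). (\<forall>i\<ge>k. a i = 0) \<and> g < k}"

definition supp :: "(mon \<Rightarrow> 'a::zero) \<Rightarrow> mon set" where
  "supp f = {p. f p \<noteq> 0}"

definition Alg :: "nat \<Rightarrow> (mon \<Rightarrow> 'a::zero) set" where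
  "Alg k = {f. finite (supp f) \<and> supp f \<subseteq> Bk k}"

text \<open>sigma^g (x^b) = rot_sign k g b * x^(rot k g b), since sigma(x_i) = x_(i+1 mod k).\<close>
definition rot :: "nat \<Rightarrow> nat \<Rightarrow> (nat \<Rightarrow> nat) \<Rightarrow> (nat \<Rightarrow> nat)" where
  "rot k g b = (\<lambda>j. if j < k then b ((j + k - g mod k) mod k) else 0)"

definition rot_sign :: "nat \<Rightarrow> nat \<Rightarrow> (nat \<Rightarrow> nat) \<Rightarrow> 'a::ring_1" where
  "rot_sign k g b = (- 1) ^ (\<Sum>(i, j) \<in> {(i, j). i < j \<and> j < k \<and> (j + g) mod k < (i + g) mod k}. b i * b j)"

text \<open>x^a x^c = mono_sign k a c * x^(a + c) in k_{-1}[x_0..x_{k-1}].\<close>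
definition mono_sign :: "nat \<Rightarrow> (nat \<Rightarrow> nat) \<Rightarrow> (nat \<Rightarrow> nat) \<Rightarrow> 'a::ring_1" where
  "mono_sign k a c = (- 1) ^ (\<Sum>(i, j) \<in> {(i, j). j < i \<and> i < k}. a i * c j)"

text \<open>(x^a # sigma^g)(x^b # sigma^h) = x^a sigma^g(x^b) # sigma^(g+h).\<close>
definition bmon :: "nat \<Rightarrow> mon \<Rightarrow> mon \<Rightarrow> mon" where
  "bmon k p q = (case p of (a, g) \<Rightarrow> case q of (b, h) \<Rightarrow>
      ((\<lambda>i. a i + rot k g b i), (g + h) mod k))"

definition bsign :: "nat \<Rightarrow> mon \<Rightarrow> mon \<Rightarrow> 'a::ring_1" where
  "bsign k p q = (case p of (a, g) \<Rightarrow> case q of (b, h) \<Rightarrow>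
      mono_sign k a (rot k g b) * rot_sign k g b)"

definition mul :: "nat \<Rightarrow> (mon \<Rightarrow> 'a::ring_1) \<Rightarrow> (mon \<Rightarrow> 'a) \<Rightarrow> (mon \<Rightarrow> 'a)" where
  "mul k f h = (\<lambda>c. \<Sum>p\<in>supp f. \<Sum>q\<in>supp h.
      if bmon k p q = c then bsign k p q * f p * h q else 0)"

definition one :: "mon \<Rightarrow> 'a::{zero,one}" where
  "one = (\<lambda>p. if p = ((\<lambda>_. 0), 0) then 1 else 0)"

definition e0 :: "nat \<Rightarrow> (mon \<Rightarrow> 'a::field)" where
  "e0 k = (\<lambda>p. if \<exists>g<k. p = ((\<lambda>_. 0), g) then inverse (of_nat k) else 0)"

inductive_set gen_ideal :: "nat \<Rightarrow> (mon \<Rightarrow> 'a::ring_1) \<Rightarrow> (mon \<Rightarrow> 'a) set"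
  for k e where
  gen: "e \<in> gen_ideal k e"
| zero: "(\<lambda>_. 0) \<in> gen_ideal k e"
| add: "x \<in> gen_ideal k e \<Longrightarrow> y \<in> gen_ideal k e \<Longrightarrow> (\<lambda>p. x p + y p) \<in> gen_ideal k e"
| lmul: "x \<in> gen_ideal k e \<Longrightarrow> u \<in> Alg k \<Longrightarrow> mul k u x \<in> gen_ideal k e"
| rmul: "x \<in> gen_ideal k e \<Longrightarrow> u \<in> Alg k \<Longrightarrow> mul k x u \<in> gen_ideal k e"

definition lin_span :: "(mon \<Rightarrow> 'a::comm_ring_1) set \<Rightarrow> (mon \<Rightarrow> 'a) set" where
  "lin_span S = {(\<lambda>p. \<Sum>s\<in>T. c s * s p) | T c. finite T \<and> T \<subseteq> S}"

definition prodl :: "nat \<Rightarrow> (mon \<Rightarrow> 'a::ring_1) list \<Rightarrow> (mon \<Rightarrow> 'a)" where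
  "prodl k xs = foldr (mul k) xs one"

definition filt :: "nat \<Rightarrow> (mon \<Rightarrow> 'a::comm_ring_1) set \<Rightarrow> nat \<Rightarrow> (mon \<Rightarrow> 'a) set" where
  "filt k F n = lin_span {prodl k xs | xs. set xs \<subseteq> F \<and> length xs \<le> n}"

definition indep_mod :: "(mon \<Rightarrow> 'a::comm_ring_1) set \<Rightarrow> (mon \<Rightarrow> 'a) set \<Rightarrow> bool" where
  "indep_mod I S = (\<forall>c. (\<lambda>p. \<Sum>s\<in>S. c s * s p) \<in> I \<longrightarrow> (\<forall>s\<in>S. c s = 0))"

definition qdim :: "(mon \<Rightarrow> 'a::comm_ring_1) set \<Rightarrow> (mon \<Rightarrow> 'a) set \<Rightarrow> enat" where
  "qdim I W = (SUP S \<in> {S. finite S \<and> S \<subseteq> W \<and> indep_mod I S}. enat (card S))"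

definition growth :: "(nat \<Rightarrow> enat) \<Rightarrow> ereal" where
  "growth d = limsup (\<lambda>n. case d n of enat j \<Rightarrow> ereal (ln (real j) / ln (real n)) | \<infinity> \<Rightarrow> \<infinity>)"

definition GKdim_quot :: "nat \<Rightarrow> (mon \<Rightarrow> 'a::field) set \<Rightarrow> ereal" where
  "GKdim_quot k I = (SUP F \<in> {F. finite F \<and> F \<subseteq> (Alg k :: (mon \<Rightarrow> 'a) set)}.
      growth (\<lambda>n. qdim I (filt k F n)))"

definition GKdim_E :: "'a::field itself \<Rightarrow> nat \<Rightarrow> ereal" where
  "GKdim_E _ k = GKdim_quot k (gen_ideal k (e0 k :: mon \<Rightarrow> 'a))"

end

theory Submission
  imports Defs
begin

lemma sum_pairs:
  fixes k :: nat shows "(\<Sum>(i,j)\<in>{(i,j). i<k \<and> j<k \<and> P i j}. f i j) = (\<Sum>i<k. \<Sum>j<k. if P i j then f i j else 0)"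
proof -
  have e: "{(i,j). i<k \<and> j<k \<and> P i j} = Sigma {..<k} (\<lambda>i. {j\<in>{..<k}. P i j})" by auto
  have "(\<Sum>(i,j)\<in>Sigma {..<k} (\<lambda>i. {j\<in>{..<k}. P i j}). f i j) = (\<Sum>i<k. \<Sum>j\<in>{j\<in>{..<k}. P i j}. f i j)"
    by (rule sum.Sigma[symmetric]) auto
  also have "\<dots> = (\<Sum>i<k. \<Sum>j<k. if P i j then f i j else 0)"
    by (rule sum.cong[OF refl], rule sum.inter_filter) simp
  finally show ?thesis unfolding e .
qed

definition bet :: "nat \<Rightarrow> (nat \<Rightarrow> nat) \<Rightarrow> (nat \<Rightarrow> nat) \<Rightarrow> nat" where
  "bet k a c = (\<Sum>i<k. \<Sum>j<k. if j < i then a i * c j else 0)"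

definition rho :: "nat \<Rightarrow> nat \<Rightarrow> (nat \<Rightarrow> nat) \<Rightarrow> nat" where
  "rho k g b = (\<Sum>i<k. \<Sum>j<k. if i < j \<and> (j + g) mod k < (i + g) mod k then b i * b j else 0)"

lemma mono_sign_bet: "mono_sign k a c = (-1) ^ bet k a c"
proof -
  have "{(i, j). j < i \<and> i < k} = {(i,j). i<k \<and> j<k \<and> j < i}" by auto
  then show ?thesis unfolding mono_sign_def bet_def using sum_pairs[where k=k and P="\<lambda>i j. j < i" and f="\<lambda>i j. a i * c j"]
    by simp
qed

lemma rot_sign_rho: "rot_sign k g b = (-1) ^ rho k g b"
proof -
  have "{(i, j). i < j \<and> j < k \<and> (j + g) mod k < (i + g) mod k} = {(i,j). i<k \<and> j<k \<and> (i < j \<and> (j + g) mod k < (i + g) mod k)}" by auto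
  then show ?thesis unfolding rot_sign_def rho_def using sum_pairs[where k=k and P="\<lambda>i j. i < j \<and> (j + g) mod k < (i + g) mod k" and f="\<lambda>i j. b i * b j"]
    by simp
qed

lemma modback: assumes "(i::nat) < k" shows "(((i+g) mod k) + k - g mod k) mod k = i"
proof -
  have k: "k > 0" using assms by simp
  have r: "g mod k < k" using k by simp
  have e: "(i+g) mod k = (i + g mod k) mod k" by (simp add: mod_add_right_eq)
  show ?thesis
  proof (cases "i + g mod k < k")
    case True
    then show ?thesis unfolding e using assms by simp
  next
    case False
    have l: "i + g mod k - k < k" using r assms by linarith
    have "(i + g mod k) mod k = (i + g mod k - k) mod k" using False
      by (simp add: le_mod_geq)
    then have "(i + g mod k) mod k = i + g mod k - k" using l by simp
    then show ?thesis unfolding e using assms r False by simp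
  qed
qed
lemma ex_pre: assumes "(j::nat) < k" shows "\<exists>i<k. (i + s) mod k = j"
proof -
  let ?i = "(j + k - s mod k) mod k"
  have k: "k > 0" using assms by simp
  have "(?i + s) mod k = j"
  proof -
    have "(?i + s) mod k = (j + k - s mod k + s) mod k" by (simp add: mod_add_left_eq)
    also have "\<dots> = (j + k - s mod k + s mod k) mod k" by (simp add: mod_add_right_eq)
    also have "\<dots> = (j + k) mod k"
    proof -
      have "s mod k < k" using k by simp
      then have "j + k - s mod k + s mod k = j + k" by linarith
      then show ?thesis by simp
    qed
    also have "\<dots> = j" using assms by simp
    finally show ?thesis .
  qed
  then show ?thesis using k by (intro exI[of _ ?i]) simp
qed

lemma rot_pos: "(i::nat) < k \<Longrightarrow> rot k g v ((i+g) mod k) = v i"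
  unfolding rot_def using modback[of i k g] by simp

lemma pos_pos: "(((x::nat)+h) mod k + g) mod k = (x + (g+h) mod k) mod k"
  by (metis (no_types, lifting) add.assoc add.commute mod_add_left_eq mod_add_right_eq)

lemma rot_rot: "rot k g (rot k h c) = rot k ((g+h) mod k) c"
proof
  fix j
  show "rot k g (rot k h c) j = rot k ((g+h) mod k) c j"
  proof (cases "j < k")
    case False then show ?thesis by (simp add: rot_def)
  next
    case True
    then obtain i where i: "i < k" "(i + (g+h)) mod k = j" using ex_pre by blast
    have k: "k > 0" using True by simp
    have jj: "((i+h) mod k + g) mod k = j" using i pos_pos[of i h k g]
      by (simp add: mod_add_right_eq)
    have "rot k g (rot k h c) j = rot k g (rot k h c) (((i+h) mod k + g) mod k)"
      using jj by simp
    also have "\<dots> = rot k h c ((i+h) mod k)" using k by (intro rot_pos) simp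
    also have "\<dots> = c i" using i by (intro rot_pos)
    finally have 1: "rot k g (rot k h c) j = c i" .
    have "rot k ((g+h) mod k) c j = rot k ((g+h) mod k) c ((i + (g+h) mod k) mod k)"
      using i by (simp add: mod_add_right_eq)
    also have "\<dots> = c i" using i by (intro rot_pos)
    finally show ?thesis using 1 by simp
  qed
qed

lemma rot_add: "rot k g (\<lambda>i. b i + v i) = (\<lambda>i. rot k g b i + rot k g v i)"
  by (auto simp: rot_def)

lemma rot_zero: "rot k g (\<lambda>_. 0) = (\<lambda>_. 0)"
  by (auto simp: rot_def)

lemma pos_inj: "(i::nat) < k \<Longrightarrow> j < k \<Longrightarrow> (i+g) mod k = (j+g) mod k \<Longrightarrow> i = j"
  by (metis modback[of i k g] modback[of j k g])

lemma sum_rot: assumes "(k::nat) > 0"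
  shows "(\<Sum>i<k. F ((i+g) mod k)) = (\<Sum>i<k. F i)"
proof -
  have b: "bij_betw (\<lambda>i. (i+g) mod k) {..<k} {..<k}"
    unfolding bij_betw_def
  proof
    show "inj_on (\<lambda>i. (i+g) mod k) {..<k}" by (auto intro: inj_onI pos_inj)
    show "(\<lambda>i. (i+g) mod k) ` {..<k} = {..<k}"
    proof
      show "(\<lambda>i. (i+g) mod k) ` {..<k} \<subseteq> {..<k}" using assms by auto
      show "{..<k} \<subseteq> (\<lambda>i. (i+g) mod k) ` {..<k}"
      proof
        fix j assume "j \<in> {..<k}"
        then obtain i where "i < k" "(i+g) mod k = j" using ex_pre[of j k g] by auto
        then show "j \<in> (\<lambda>i. (i+g) mod k) ` {..<k}" by auto
      qed
    qed
  qed
  show ?thesis using sum.reindex_bij_betw[OF b, of F] by simp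
qed

lemma bet_rot: assumes "(k::nat) > 0"
  shows "bet k (rot k g u) (rot k g v) = (\<Sum>i<k. \<Sum>j<k. if (j+g) mod k < (i+g) mod k then u i * v j else 0)"
proof -
  define G where "G i' = (\<Sum>j'<k. if j' < i' then rot k g u i' * rot k g v j' else 0)" for i'
  have "bet k (rot k g u) (rot k g v) = (\<Sum>i<k. G i)" unfolding bet_def G_def by simp
  also have "\<dots> = (\<Sum>i<k. G ((i+g) mod k))" using sum_rot[OF assms, of G g] by simp
  also have "\<dots> = (\<Sum>i<k. \<Sum>j<k. if (j+g) mod k < (i+g) mod k then u i * v j else 0)"
  proof (rule sum.cong[OF refl])
    fix i assume i: "i \<in> {..<k}"
    define H where "H j' = (if j' < (i+g) mod k then rot k g u ((i+g) mod k) * rot k g v j' else 0)" for j'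
    have "G ((i+g) mod k) = (\<Sum>j<k. H j)" unfolding G_def H_def by simp
    also have "\<dots> = (\<Sum>j<k. H ((j+g) mod k))" using sum_rot[OF assms, of H g] by simp
    also have "\<dots> = (\<Sum>j<k. if (j+g) mod k < (i+g) mod k then u i * v j else 0)"
      unfolding H_def using i by (intro sum.cong[OF refl]) (simp add: rot_pos)
    finally show "G ((i+g) mod k) = \<dots>" .
  qed
  finally show ?thesis .
qed


lemma rho_rot: assumes "(k::nat) > 0"
  shows "rho k g (rot k h c) = (\<Sum>i<k. \<Sum>j<k. if (i+h) mod k < (j+h) mod k \<and> (j + (g+h) mod k) mod k < (i + (g+h) mod k) mod k then c i * c j else 0)"
proof -
  define G where "G i' = (\<Sum>j'<k. if i' < j' \<and> (j' + g) mod k < (i' + g) mod k then rot k h c i' * rot k h c j' else 0)" for i'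
  have "rho k g (rot k h c) = (\<Sum>i<k. G i)" unfolding rho_def G_def by simp
  also have "\<dots> = (\<Sum>i<k. G ((i+h) mod k))" using sum_rot[OF assms, of G h] by simp
  also have "\<dots> = (\<Sum>i<k. \<Sum>j<k. if (i+h) mod k < (j+h) mod k \<and> (j + (g+h) mod k) mod k < (i + (g+h) mod k) mod k then c i * c j else 0)"
  proof (rule sum.cong[OF refl])
    fix i assume i: "i \<in> {..<k}"
    define H where "H j' = (if (i+h) mod k < j' \<and> (j' + g) mod k < ((i+h) mod k + g) mod k then rot k h c ((i+h) mod k) * rot k h c j' else 0)" for j'
    have "G ((i+h) mod k) = (\<Sum>j<k. H j)" unfolding G_def H_def by simp
    also have "\<dots> = (\<Sum>j<k. H ((j+h) mod k))" using sum_rot[OF assms, of H h] by simp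
    also have "\<dots> = (\<Sum>j<k. if (i+h) mod k < (j+h) mod k \<and> (j + (g+h) mod k) mod k < (i + (g+h) mod k) mod k then c i * c j else 0)"
      unfolding H_def
    proof (intro sum.cong[OF refl])
      fix j assume j: "j \<in> {..<k}"
      have 1: "rot k h c ((i+h) mod k) = c i" "rot k h c ((j+h) mod k) = c j" using i j by (simp_all add: rot_pos)
      have 2: "((i+h) mod k + g) mod k = (i + (g+h) mod k) mod k" "((j+h) mod k + g) mod k = (j + (g+h) mod k) mod k"
        by (rule pos_pos)+
      show "(if (i+h) mod k < (j+h) mod k \<and> ((j+h) mod k + g) mod k < ((i+h) mod k + g) mod k then rot k h c ((i+h) mod k) * rot k h c ((j+h) mod k) else 0) = (if (i+h) mod k < (j+h) mod k \<and> (j + (g+h) mod k) mod k < (i + (g+h) mod k) mod k then c i * c j else 0)"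
        unfolding 1 2 ..
    qed
    finally show "G ((i+h) mod k) = \<dots>" .
  qed
  finally show ?thesis .
qed


definition crossr :: "nat \<Rightarrow> nat \<Rightarrow> (nat \<Rightarrow> nat) \<Rightarrow> (nat \<Rightarrow> nat) \<Rightarrow> nat" where
  "crossr k g b v = (\<Sum>i<k. \<Sum>j<k. if i < j \<and> (j + g) mod k < (i + g) mod k then b i * v j + v i * b j else 0)"

lemma rho_add: "rho k g (\<lambda>i. b i + v i) = rho k g b + rho k g v + crossr k g b v"
  unfolding rho_def crossr_def
  by (simp add: sum.distrib[symmetric]) (intro sum.cong refl; simp add: algebra_simps)

lemma bet_add1: "bet k (\<lambda>i. a i + x i) c = bet k a c + bet k x c"
  unfolding bet_def by (simp add: sum.distrib[symmetric]) (intro sum.cong refl; simp add: algebra_simps)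

lemma bet_add2: "bet k a (\<lambda>i. x i + y i) = bet k a x + bet k a y"
  unfolding bet_def by (simp add: sum.distrib[symmetric]) (intro sum.cong refl; simp add: algebra_simps)

lemma dsum_cong: "(\<And>i j. i < k \<Longrightarrow> j < k \<Longrightarrow> f i j = g i j) \<Longrightarrow> (\<Sum>i<(k::nat). \<Sum>j<k. f i j) = (\<Sum>i<k. \<Sum>j<k. g i j)"
  by simp

lemma I2: assumes k: "(k::nat) > 0"
  shows "even (bet k (rot k g u) (rot k g v) + bet k u v + crossr k g u v)"
proof -
  define P where "P x = (x + g) mod k" for x
  have c1: "crossr k g u v = (\<Sum>i<k. \<Sum>j<k. if i < j \<and> P j < P i then u i * v j else 0) + (\<Sum>i<k. \<Sum>j<k. if i < j \<and> P j < P i then v i * u j else 0)"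
    unfolding crossr_def P_def by (simp add: sum.distrib[symmetric]) (intro sum.cong refl; simp)
  have c2: "(\<Sum>i<k. \<Sum>j<k. if i < j \<and> P j < P i then v i * u j else 0) = (\<Sum>i<k. \<Sum>j<k. if j < i \<and> P i < P j then u i * v j else 0)"
    by (subst sum.swap) (intro sum.cong refl; simp add: mult.commute)
  have b1: "bet k (rot k g u) (rot k g v) = (\<Sum>i<k. \<Sum>j<k. if P j < P i then u i * v j else 0)"
    unfolding P_def by (rule bet_rot[OF k])
  have b2: "bet k u v = (\<Sum>i<k. \<Sum>j<k. if j < i then u i * v j else 0)"
    unfolding bet_def ..
  have "bet k (rot k g u) (rot k g v) + bet k u v + crossr k g u v =
     (\<Sum>i<k. \<Sum>j<k. (if P j < P i then u i * v j else 0) + (if j < i then u i * v j else 0) + (if i < j \<and> P j < P i then u i * v j else 0) + (if j < i \<and> P i < P j then u i * v j else 0))"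
    unfolding b1 b2 c1 c2 by (simp add: sum.distrib)
  also have "\<dots> = (\<Sum>i<k. \<Sum>j<k. 2 * (if j < i \<or> (i < j \<and> P j < P i) then u i * v j else 0))"
  proof (rule dsum_cong)
    fix i j assume ij: "i < k" "j < k"
    have d: "i \<noteq> j \<Longrightarrow> P i \<noteq> P j" unfolding P_def using pos_inj[OF ij] by blast
    show "(if P j < P i then u i * v j else 0) + (if j < i then u i * v j else 0) + (if i < j \<and> P j < P i then u i * v j else 0) + (if j < i \<and> P i < P j then u i * v j else 0) = 2 * (if j < i \<or> (i < j \<and> P j < P i) then u i * v j else 0)"
      using d by (cases "i < j"; cases "j < i"; cases "P j < P i"; auto)
  qed
  also have "\<dots> = 2 * (\<Sum>i<k. \<Sum>j<k. (if j < i \<or> (i < j \<and> P j < P i) then u i * v j else 0))"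
    by (simp add: sum_distrib_left)
  finally show ?thesis by simp
qed

lemma I1: assumes k: "(k::nat) > 0"
  shows "even (rho k ((g+h) mod k) c + rho k h c + rho k g (rot k h c))"
proof -
  define P where "P x = (x + (g+h) mod k) mod k" for x
  define H where "H x = (x + h) mod k" for x
  define w where "w i j = c i * c j" for i j
  define R1 where "R1 i j = (if i < j \<and> H j < H i \<and> P i < P j then w i j else 0)" for i j
  define R2 where "R2 i j = (if j < i \<and> H i < H j \<and> P j < P i then w i j else 0)" for i j
  define Q where "Q i j = (if i < j \<and> P j < P i then w i j else 0)" for i j
  have r1: "rho k ((g+h) mod k) c = (\<Sum>i<k. \<Sum>j<k. if i < j \<and> P j < P i then w i j else 0)"
    unfolding rho_def P_def w_def by (simp add: mod_add_right_eq)
  have r2: "rho k h c = (\<Sum>i<k. \<Sum>j<k. if i < j \<and> H j < H i then w i j else 0)"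
    unfolding rho_def H_def w_def ..
  have r3: "rho k g (rot k h c) = (\<Sum>i<k. \<Sum>j<k. if H i < H j \<and> P j < P i then w i j else 0)"
    unfolding rho_rot[OF k] H_def P_def w_def ..
  have "rho k ((g+h) mod k) c + rho k h c + rho k g (rot k h c) =
     (\<Sum>i<k. \<Sum>j<k. (if i < j \<and> P j < P i then w i j else 0) + (if i < j \<and> H j < H i then w i j else 0) + (if H i < H j \<and> P j < P i then w i j else 0))"
    unfolding r1 r2 r3 by (simp add: sum.distrib)
  also have "\<dots> = (\<Sum>i<k. \<Sum>j<k. 2 * Q i j + R1 i j + R2 i j)"
  proof (rule dsum_cong)
    fix i j assume ij: "i < k" "j < k"
    have d1: "i \<noteq> j \<Longrightarrow> P i \<noteq> P j" unfolding P_def using pos_inj[OF ij] by blast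
    have d2: "i \<noteq> j \<Longrightarrow> H i \<noteq> H j" unfolding H_def using pos_inj[OF ij] by blast
    show "(if i < j \<and> P j < P i then w i j else 0) + (if i < j \<and> H j < H i then w i j else 0) + (if H i < H j \<and> P j < P i then w i j else 0) = 2 * Q i j + R1 i j + R2 i j"
      unfolding Q_def R1_def R2_def
      using d1 d2 by (cases "i < j"; cases "j < i"; cases "P j < P i"; cases "H j < H i"; auto)
  qed
  also have "\<dots> = 2 * (\<Sum>i<k. \<Sum>j<k. Q i j) + (\<Sum>i<k. \<Sum>j<k. R1 i j) + (\<Sum>i<k. \<Sum>j<k. R2 i j)"
    by (simp add: sum.distrib sum_distrib_left)
  also have "(\<Sum>i<k. \<Sum>j<k. R2 i j) = (\<Sum>i<k. \<Sum>j<k. R1 i j)"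
    unfolding R1_def R2_def w_def by (subst sum.swap) (intro sum.cong refl; simp add: mult.commute)
  finally show ?thesis by simp
qed

lemma neg1_eq: "even (x + y) \<Longrightarrow> (-1::'a::ring_1) ^ x = (-1) ^ y"
  by (cases "even x") (auto simp: neg_one_even_power neg_one_odd_power)

lemma bsign_cocycle: assumes k: "(k::nat) > 0"
  shows "(bsign k p q :: 'a::comm_ring_1) * bsign k (bmon k p q) r = bsign k q r * bsign k p (bmon k q r)"
proof -
  obtain a g where p: "p = (a, g)" by fastforce
  obtain b h where q: "q = (b, h)" by fastforce
  obtain c l where r: "r = (c, l)" by fastforce
  define v where "v = rot k h c"
  define EL where "EL = bet k a (rot k g b) + rho k g b + (bet k a (rot k g v) + bet k (rot k g b) (rot k g v)) + rho k ((g+h) mod k) c"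
  define ER where "ER = bet k b v + rho k h c + (bet k a (rot k g b) + bet k a (rot k g v)) + (rho k g b + rho k g v + crossr k g b v)"
  have L: "(bsign k p q :: 'a) * bsign k (bmon k p q) r = (-1) ^ EL"
    unfolding p q r bsign_def bmon_def EL_def v_def
    by (simp add: mono_sign_bet rot_sign_rho power_add rot_rot[symmetric] bet_add1 mult_ac)
  have R: "(bsign k q r :: 'a) * bsign k p (bmon k q r) = (-1) ^ ER"
    unfolding p q r bsign_def bmon_def ER_def v_def
    by (simp add: mono_sign_bet rot_sign_rho power_add rot_add bet_add2 rho_add mult_ac)
  have "even (EL + ER)"
  proof -
    have e1: "even (bet k (rot k g b) (rot k g v) + bet k b v + crossr k g b v)" by (rule I2[OF k])
    have e2: "even (rho k ((g+h) mod k) c + rho k h c + rho k g v)" unfolding v_def by (rule I1[OF k])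
    have "EL + ER = 2 * (bet k a (rot k g b) + rho k g b + bet k a (rot k g v)) + (bet k (rot k g b) (rot k g v) + bet k b v + crossr k g b v) + (rho k ((g+h) mod k) c + rho k h c + rho k g v)"
      unfolding EL_def ER_def by simp
    then show ?thesis using e1 e2 by simp
  qed
  then show ?thesis using L R neg1_eq by metis
qed

definition dlt :: "mon \<Rightarrow> mon \<Rightarrow> 'a::zero_neq_one" where
  "dlt p = (\<lambda>x. if x = p then 1 else 0)"

lemma supp_dlt: "supp (dlt p :: mon \<Rightarrow> 'a::zero_neq_one) = {p}"
  unfolding supp_def dlt_def by auto

lemma mul_alt:
  assumes "finite A" "supp f \<subseteq> A" "finite B" "supp h \<subseteq> B"
  shows "mul k f h c = (\<Sum>p\<in>A. \<Sum>q\<in>B. if bmon k p q = c then bsign k p q * f p * h q else 0)"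
proof -
  have "mul k f h c = (\<Sum>p\<in>supp f. \<Sum>q\<in>supp h. if bmon k p q = c then bsign k p q * f p * h q else 0)"
    unfolding mul_def ..
  also have "\<dots> = (\<Sum>p\<in>A. \<Sum>q\<in>supp h. if bmon k p q = c then bsign k p q * f p * h q else 0)"
  proof (rule sum.mono_neutral_left[OF assms(1,2)])
    show "\<forall>p\<in>A - supp f. (\<Sum>q\<in>supp h. if bmon k p q = c then bsign k p q * f p * h q else 0) = 0"
    proof
      fix p assume "p \<in> A - supp f"
      then have "f p = 0" by (simp add: supp_def)
      then show "(\<Sum>q\<in>supp h. if bmon k p q = c then bsign k p q * f p * h q else 0) = 0" by (simp cong: if_cong)
    qed
  qed
  also have "\<dots> = (\<Sum>p\<in>A. \<Sum>q\<in>B. if bmon k p q = c then bsign k p q * f p * h q else 0)"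
    by (rule sum.cong[OF refl], rule sum.mono_neutral_left[OF assms(3,4)]) (auto simp: supp_def)
  finally show ?thesis .
qed

lemma supp_mul:
  assumes "finite (supp f)" "finite (supp h)"
  shows "supp (mul k f h) \<subseteq> (\<lambda>(p,q). bmon k p q) ` (supp f \<times> supp h)"
proof
  fix c assume c: "c \<in> supp (mul k f h)"
  show "c \<in> (\<lambda>(p,q). bmon k p q) ` (supp f \<times> supp h)"
  proof (rule ccontr)
    assume n: "c \<notin> (\<lambda>(p,q). bmon k p q) ` (supp f \<times> supp h)"
    have "mul k f h c = 0" unfolding mul_def
      by (rule sum.neutral, rule ballI, rule sum.neutral) (use n in force)
    then show False using c by (simp add: supp_def)
  qed
qed

lemma finite_supp_mul:
  assumes "finite (supp f)" "finite (supp h)"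
  shows "finite (supp (mul k f h))"
  by (rule finite_subset[OF supp_mul[OF assms]]) (use assms in auto)

lemma mul_tripleL:
  fixes f g h :: "mon \<Rightarrow> 'a::comm_ring_1"
  assumes F: "finite (supp f)" and G: "finite (supp g)" and H: "finite (supp h)"
  shows "mul k (mul k f g) h c = (\<Sum>p\<in>supp f. \<Sum>q\<in>supp g. \<Sum>r\<in>supp h.
      if bmon k (bmon k p q) r = c then bsign k (bmon k p q) r * bsign k p q * f p * g q * h r else 0)"
proof -
  define Z where "Z = (\<lambda>(p,q). bmon k p q) ` (supp f \<times> supp g)"
  have fZ: "finite Z" unfolding Z_def using F G by simp
  have sZ: "supp (mul k f g) \<subseteq> Z" unfolding Z_def by (rule supp_mul[OF F G])
  define T where "T z r p q = (if bmon k p q = z \<and> bmon k z r = c then bsign k z r * bsign k p q * f p * g q * h r else 0)" for z r p q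
  have "mul k (mul k f g) h c = (\<Sum>z\<in>Z. \<Sum>r\<in>supp h. if bmon k z r = c then bsign k z r * mul k f g z * h r else 0)"
    by (rule mul_alt[OF fZ sZ H]) simp
  also have "\<dots> = (\<Sum>z\<in>Z. \<Sum>r\<in>supp h. \<Sum>p\<in>supp f. \<Sum>q\<in>supp g. T z r p q)"
  proof (intro sum.cong refl)
    fix z r
    show "(if bmon k z r = c then bsign k z r * mul k f g z * h r else 0) = (\<Sum>p\<in>supp f. \<Sum>q\<in>supp g. T z r p q)"
      unfolding T_def mul_def
      by (cases "bmon k z r = c") (simp_all add: sum_distrib_left sum_distrib_right mult_ac if_distrib cong: if_cong)
  qed
  also have "\<dots> = (\<Sum>r\<in>supp h. \<Sum>z\<in>Z. \<Sum>p\<in>supp f. \<Sum>q\<in>supp g. T z r p q)"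
    by (rule sum.swap)
  also have "\<dots> = (\<Sum>r\<in>supp h. \<Sum>p\<in>supp f. \<Sum>q\<in>supp g. \<Sum>z\<in>Z. T z r p q)"
  proof (rule sum.cong[OF refl])
    fix r
    have "(\<Sum>z\<in>Z. \<Sum>p\<in>supp f. \<Sum>q\<in>supp g. T z r p q) = (\<Sum>p\<in>supp f. \<Sum>z\<in>Z. \<Sum>q\<in>supp g. T z r p q)"
      by (rule sum.swap)
    also have "\<dots> = (\<Sum>p\<in>supp f. \<Sum>q\<in>supp g. \<Sum>z\<in>Z. T z r p q)"
      by (rule sum.cong[OF refl], rule sum.swap)
    finally show "(\<Sum>z\<in>Z. \<Sum>p\<in>supp f. \<Sum>q\<in>supp g. T z r p q) = \<dots>" .
  qed
  also have "\<dots> = (\<Sum>r\<in>supp h. \<Sum>p\<in>supp f. \<Sum>q\<in>supp g.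
      if bmon k (bmon k p q) r = c then bsign k (bmon k p q) r * bsign k p q * f p * g q * h r else 0)"
  proof (intro sum.cong refl)
    fix r p q assume p: "p \<in> supp f" and q: "q \<in> supp g"
    have m: "bmon k p q \<in> Z" unfolding Z_def using p q by force
    show "(\<Sum>z\<in>Z. T z r p q) = (if bmon k (bmon k p q) r = c then bsign k (bmon k p q) r * bsign k p q * f p * g q * h r else 0)"
    proof -
      have "(\<Sum>z\<in>Z. T z r p q) = (\<Sum>z\<in>Z. if bmon k p q = z then (if bmon k z r = c then bsign k z r * bsign k p q * f p * g q * h r else 0) else 0)"
        by (rule sum.cong[OF refl]) (auto simp: T_def)
      also have "\<dots> = (if bmon k (bmon k p q) r = c then bsign k (bmon k p q) r * bsign k p q * f p * g q * h r else 0)"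
        using fZ m by (subst sum.delta') simp_all
      finally show ?thesis .
    qed
  qed
  also have "\<dots> = (\<Sum>p\<in>supp f. \<Sum>r\<in>supp h. \<Sum>q\<in>supp g.
      if bmon k (bmon k p q) r = c then bsign k (bmon k p q) r * bsign k p q * f p * g q * h r else 0)"
    by (rule sum.swap)
  also have "\<dots> = (\<Sum>p\<in>supp f. \<Sum>q\<in>supp g. \<Sum>r\<in>supp h.
      if bmon k (bmon k p q) r = c then bsign k (bmon k p q) r * bsign k p q * f p * g q * h r else 0)"
    by (rule sum.cong[OF refl], rule sum.swap)
  finally show ?thesis .
qed

lemma mul_tripleR:
  fixes f g h :: "mon \<Rightarrow> 'a::comm_ring_1"
  assumes F: "finite (supp f)" and G: "finite (supp g)" and H: "finite (supp h)"
  shows "mul k f (mul k g h) c = (\<Sum>p\<in>supp f. \<Sum>q\<in>supp g. \<Sum>r\<in>supp h.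
      if bmon k p (bmon k q r) = c then bsign k p (bmon k q r) * bsign k q r * f p * g q * h r else 0)"
proof -
  define Z where "Z = (\<lambda>(p,q). bmon k p q) ` (supp g \<times> supp h)"
  have fZ: "finite Z" unfolding Z_def using G H by simp
  have sZ: "supp (mul k g h) \<subseteq> Z" unfolding Z_def by (rule supp_mul[OF G H])
  define T where "T p z q r = (if bmon k q r = z \<and> bmon k p z = c then bsign k p z * bsign k q r * f p * g q * h r else 0)" for p z q r
  have "mul k f (mul k g h) c = (\<Sum>p\<in>supp f. \<Sum>z\<in>Z. if bmon k p z = c then bsign k p z * f p * mul k g h z else 0)"
    by (rule mul_alt[OF F _ fZ sZ]) simp
  also have "\<dots> = (\<Sum>p\<in>supp f. \<Sum>z\<in>Z. \<Sum>q\<in>supp g. \<Sum>r\<in>supp h. T p z q r)"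
  proof (intro sum.cong refl)
    fix p z
    show "(if bmon k p z = c then bsign k p z * f p * mul k g h z else 0) = (\<Sum>q\<in>supp g. \<Sum>r\<in>supp h. T p z q r)"
      unfolding T_def mul_def
      by (cases "bmon k p z = c") (simp_all add: sum_distrib_left sum_distrib_right mult_ac if_distrib cong: if_cong)
  qed
  also have "\<dots> = (\<Sum>p\<in>supp f. \<Sum>q\<in>supp g. \<Sum>r\<in>supp h. \<Sum>z\<in>Z. T p z q r)"
  proof (rule sum.cong[OF refl])
    fix p
    have "(\<Sum>z\<in>Z. \<Sum>q\<in>supp g. \<Sum>r\<in>supp h. T p z q r) = (\<Sum>q\<in>supp g. \<Sum>z\<in>Z. \<Sum>r\<in>supp h. T p z q r)"
      by (rule sum.swap)
    also have "\<dots> = (\<Sum>q\<in>supp g. \<Sum>r\<in>supp h. \<Sum>z\<in>Z. T p z q r)"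
      by (rule sum.cong[OF refl], rule sum.swap)
    finally show "(\<Sum>z\<in>Z. \<Sum>q\<in>supp g. \<Sum>r\<in>supp h. T p z q r) = \<dots>" .
  qed
  also have "\<dots> = (\<Sum>p\<in>supp f. \<Sum>q\<in>supp g. \<Sum>r\<in>supp h.
      if bmon k p (bmon k q r) = c then bsign k p (bmon k q r) * bsign k q r * f p * g q * h r else 0)"
  proof (intro sum.cong refl)
    fix p q r assume q: "q \<in> supp g" and r: "r \<in> supp h"
    have m: "bmon k q r \<in> Z" unfolding Z_def using q r by force
    have "(\<Sum>z\<in>Z. T p z q r) = (\<Sum>z\<in>Z. if bmon k q r = z then (if bmon k p z = c then bsign k p z * bsign k q r * f p * g q * h r else 0) else 0)"
      by (rule sum.cong[OF refl]) (auto simp: T_def)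
    also have "\<dots> = (if bmon k p (bmon k q r) = c then bsign k p (bmon k q r) * bsign k q r * f p * g q * h r else 0)"
      using fZ m by (subst sum.delta') simp_all
    finally show "(\<Sum>z\<in>Z. T p z q r) = \<dots>" .
  qed
  finally show ?thesis .
qed

lemma bmon_assoc: "bmon k (bmon k p q) r = bmon k p (bmon k q r)"
proof -
  obtain a g where p: "p = (a, g)" by fastforce
  obtain b h where q: "q = (b, h)" by fastforce
  obtain c l where r: "r = (c, l)" by fastforce
  have "((g + h) mod k + l) mod k = (g + (h + l) mod k) mod k"
    by (metis add.assoc mod_add_left_eq mod_add_right_eq)
  then show ?thesis unfolding p q r bmon_def
    by (simp add: rot_rot[symmetric] rot_add add.assoc)
qed

lemma mul_assoc:
  fixes f g h :: "mon \<Rightarrow> 'a::comm_ring_1"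
  assumes k: "k > 0" and F: "finite (supp f)" and G: "finite (supp g)" and H: "finite (supp h)"
  shows "mul k (mul k f g) h = mul k f (mul k g h)"
proof
  fix c
  show "mul k (mul k f g) h c = mul k f (mul k g h) c"
    unfolding mul_tripleL[OF F G H] mul_tripleR[OF F G H]
  proof (intro sum.cong refl)
    fix p q r
    have "(bsign k p q :: 'a) * bsign k (bmon k p q) r = bsign k q r * bsign k p (bmon k q r)"
      by (rule bsign_cocycle[OF k])
    then show "(if bmon k (bmon k p q) r = c then bsign k (bmon k p q) r * bsign k p q * f p * g q * h r else 0) =
      (if bmon k p (bmon k q r) = c then bsign k p (bmon k q r) * bsign k q r * f p * g q * h r else 0)"
      by (simp add: bmon_assoc mult_ac)
  qed
qed

lemma supp_lin: fixes f :: "'i \<Rightarrow> mon \<Rightarrow> 'a::comm_ring_1" shows "supp (\<lambda>x. \<Sum>i\<in>I. c i * f i x) \<subseteq> (\<Union>i\<in>I. supp (f i))"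
proof
  fix x assume x: "x \<in> supp (\<lambda>x. \<Sum>i\<in>I. c i * f i x)"
  show "x \<in> (\<Union>i\<in>I. supp (f i))"
  proof (rule ccontr)
    assume "x \<notin> (\<Union>i\<in>I. supp (f i))"
    then have "\<forall>i\<in>I. f i x = 0" by (auto simp: supp_def)
    then have "(\<Sum>i\<in>I. c i * f i x) = 0" by simp
    then show False using x by (simp add: supp_def)
  qed
qed

lemma mul_lin_left:
  fixes f :: "'i \<Rightarrow> mon \<Rightarrow> 'a::comm_ring_1"
  assumes I: "finite I" and A: "finite A" and sA: "\<forall>i\<in>I. supp (f i) \<subseteq> A" and H: "finite (supp h)"
  shows "mul k (\<lambda>x. \<Sum>i\<in>I. c i * f i x) h y = (\<Sum>i\<in>I. c i * mul k (f i) h y)"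
proof -
  have s: "supp (\<lambda>x. \<Sum>i\<in>I. c i * f i x) \<subseteq> A" using supp_lin[of c f I] sA by blast
  have "mul k (\<lambda>x. \<Sum>i\<in>I. c i * f i x) h y = (\<Sum>p\<in>A. \<Sum>q\<in>supp h. if bmon k p q = y then bsign k p q * (\<Sum>i\<in>I. c i * f i p) * h q else 0)"
    by (rule mul_alt[OF A s H]) simp
  also have "\<dots> = (\<Sum>p\<in>A. \<Sum>q\<in>supp h. \<Sum>i\<in>I. c i * (if bmon k p q = y then bsign k p q * f i p * h q else 0))"
  proof (intro sum.cong refl)
    fix p q
    show "(if bmon k p q = y then bsign k p q * (\<Sum>i\<in>I. c i * f i p) * h q else 0) = (\<Sum>i\<in>I. c i * (if bmon k p q = y then bsign k p q * f i p * h q else 0))"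
      by (cases "bmon k p q = y") (simp_all add: sum_distrib_left sum_distrib_right mult_ac)
  qed
  also have "\<dots> = (\<Sum>p\<in>A. \<Sum>i\<in>I. \<Sum>q\<in>supp h. c i * (if bmon k p q = y then bsign k p q * f i p * h q else 0))"
    by (rule sum.cong[OF refl], rule sum.swap)
  also have "\<dots> = (\<Sum>i\<in>I. \<Sum>p\<in>A. \<Sum>q\<in>supp h. c i * (if bmon k p q = y then bsign k p q * f i p * h q else 0))"
    by (rule sum.swap)
  also have "\<dots> = (\<Sum>i\<in>I. c i * mul k (f i) h y)"
  proof (rule sum.cong[OF refl])
    fix i assume i: "i \<in> I"
    have "mul k (f i) h y = (\<Sum>p\<in>A. \<Sum>q\<in>supp h. if bmon k p q = y then bsign k p q * f i p * h q else 0)"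
      by (rule mul_alt[OF A _ H]) (use sA i in auto)
    then show "(\<Sum>p\<in>A. \<Sum>q\<in>supp h. c i * (if bmon k p q = y then bsign k p q * f i p * h q else 0)) = c i * mul k (f i) h y"
      by (simp add: sum_distrib_left)
  qed
  finally show ?thesis .
qed

lemma mul_lin_right:
  fixes f :: "'i \<Rightarrow> mon \<Rightarrow> 'a::comm_ring_1"
  assumes I: "finite I" and A: "finite A" and sA: "\<forall>i\<in>I. supp (f i) \<subseteq> A" and H: "finite (supp h)"
  shows "mul k h (\<lambda>x. \<Sum>i\<in>I. c i * f i x) y = (\<Sum>i\<in>I. c i * mul k h (f i) y)"
proof -
  have s: "supp (\<lambda>x. \<Sum>i\<in>I. c i * f i x) \<subseteq> A" using supp_lin[of c f I] sA by blast
  have "mul k h (\<lambda>x. \<Sum>i\<in>I. c i * f i x) y = (\<Sum>p\<in>supp h. \<Sum>q\<in>A. if bmon k p q = y then bsign k p q * h p * (\<Sum>i\<in>I. c i * f i q) else 0)"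
    by (rule mul_alt[OF H _ A s]) simp
  also have "\<dots> = (\<Sum>p\<in>supp h. \<Sum>q\<in>A. \<Sum>i\<in>I. c i * (if bmon k p q = y then bsign k p q * h p * f i q else 0))"
  proof (intro sum.cong refl)
    fix p q
    show "(if bmon k p q = y then bsign k p q * h p * (\<Sum>i\<in>I. c i * f i q) else 0) = (\<Sum>i\<in>I. c i * (if bmon k p q = y then bsign k p q * h p * f i q else 0))"
      by (cases "bmon k p q = y") (simp_all add: sum_distrib_left sum_distrib_right mult_ac)
  qed
  also have "\<dots> = (\<Sum>p\<in>supp h. \<Sum>i\<in>I. \<Sum>q\<in>A. c i * (if bmon k p q = y then bsign k p q * h p * f i q else 0))"
    by (rule sum.cong[OF refl], rule sum.swap)
  also have "\<dots> = (\<Sum>i\<in>I. \<Sum>p\<in>supp h. \<Sum>q\<in>A. c i * (if bmon k p q = y then bsign k p q * h p * f i q else 0))"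
    by (rule sum.swap)
  also have "\<dots> = (\<Sum>i\<in>I. c i * mul k h (f i) y)"
  proof (rule sum.cong[OF refl])
    fix i assume i: "i \<in> I"
    have "mul k h (f i) y = (\<Sum>p\<in>supp h. \<Sum>q\<in>A. if bmon k p q = y then bsign k p q * h p * f i q else 0)"
      by (rule mul_alt[OF H _ A]) (use sA i in auto)
    then show "(\<Sum>p\<in>supp h. \<Sum>q\<in>A. c i * (if bmon k p q = y then bsign k p q * h p * f i q else 0)) = c i * mul k h (f i) y"
      by (simp add: sum_distrib_left)
  qed
  finally show ?thesis .
qed

lemma mul_scale_left:
  fixes f h :: "mon \<Rightarrow> 'a::comm_ring_1"
  assumes "finite (supp f)" "finite (supp h)"
  shows "mul k (\<lambda>x. c * f x) h = (\<lambda>y. c * mul k f h y)"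
proof
  fix y
  have "mul k (\<lambda>x. \<Sum>i\<in>{0::nat}. (\<lambda>_. c) i * (\<lambda>_. f) i x) h y = (\<Sum>i\<in>{0::nat}. (\<lambda>_. c) i * mul k ((\<lambda>_. f) i) h y)"
    by (rule mul_lin_left) (use assms in auto)
  then show "mul k (\<lambda>x. c * f x) h y = c * mul k f h y" by simp
qed

lemma mul_scale_right:
  fixes f h :: "mon \<Rightarrow> 'a::comm_ring_1"
  assumes "finite (supp f)" "finite (supp h)"
  shows "mul k h (\<lambda>x. c * f x) = (\<lambda>y. c * mul k h f y)"
proof
  fix y
  have "mul k h (\<lambda>x. \<Sum>i\<in>{0::nat}. (\<lambda>_. c) i * (\<lambda>_. f) i x) y = (\<Sum>i\<in>{0::nat}. (\<lambda>_. c) i * mul k h ((\<lambda>_. f) i) y)"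
    by (rule mul_lin_right) (use assms in auto)
  then show "mul k h (\<lambda>x. c * f x) y = c * mul k h f y" by simp
qed

lemma mul_add_left:
  fixes f g h :: "mon \<Rightarrow> 'a::comm_ring_1"
  assumes "finite (supp f)" "finite (supp g)" "finite (supp h)"
  shows "mul k (\<lambda>x. f x + g x) h = (\<lambda>y. mul k f h y + mul k g h y)"
proof
  fix y
  have "mul k (\<lambda>x. \<Sum>i\<in>{False,True}. (\<lambda>_. 1) i * (\<lambda>i. if i then f else g) i x) h y = (\<Sum>i\<in>{False,True}. (\<lambda>_. 1) i * mul k ((\<lambda>i. if i then f else g) i) h y)"
    by (rule mul_lin_left[where A="supp f \<union> supp g"]) (use assms in auto)
  then show "mul k (\<lambda>x. f x + g x) h y = mul k f h y + mul k g h y" by (simp add: add.commute)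
qed

lemma mul_add_right:
  fixes f g h :: "mon \<Rightarrow> 'a::comm_ring_1"
  assumes "finite (supp f)" "finite (supp g)" "finite (supp h)"
  shows "mul k h (\<lambda>x. f x + g x) = (\<lambda>y. mul k h f y + mul k h g y)"
proof
  fix y
  have "mul k h (\<lambda>x. \<Sum>i\<in>{False,True}. (\<lambda>_. 1) i * (\<lambda>i. if i then f else g) i x) y = (\<Sum>i\<in>{False,True}. (\<lambda>_. 1) i * mul k h ((\<lambda>i. if i then f else g) i) y)"
    by (rule mul_lin_right[where A="supp f \<union> supp g"]) (use assms in auto)
  then show "mul k h (\<lambda>x. f x + g x) y = mul k h f y + mul k h g y" by (simp add: add.commute)
qed

lemma supp_zero: "supp (\<lambda>_. 0) = {}" unfolding supp_def by simp

lemma mul_zero_left: "mul k (\<lambda>_. 0) h = (\<lambda>_. 0)"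
  unfolding mul_def supp_zero by simp

lemma mul_zero_right: "mul k h (\<lambda>_. 0) = (\<lambda>_. 0)"
  unfolding mul_def supp_zero by simp

lemma dlt_decomp:
  fixes f :: "mon \<Rightarrow> 'a::comm_ring_1"
  assumes "finite (supp f)"
  shows "f = (\<lambda>x. \<Sum>p\<in>supp f. f p * dlt p x)"
proof
  fix x
  have "(\<Sum>p\<in>supp f. f p * dlt p x) = (\<Sum>p\<in>supp f. if x = p then f p else 0)"
    by (rule sum.cong) (auto simp: dlt_def)
  also have "\<dots> = f x" using assms by (simp add: sum.delta supp_def)
  finally show "f x = (\<Sum>p\<in>supp f. f p * dlt p x)" by simp
qed

lemma mul_dlt_dlt:
  "mul k (dlt p) (dlt q) = (\<lambda>x. (bsign k p q :: 'a::comm_ring_1) * dlt (bmon k p q) x)"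
  unfolding mul_def supp_dlt by (auto simp: dlt_def)

lemma one_dlt: "one = dlt ((\<lambda>_. 0), 0)"
  unfolding one_def dlt_def by auto

lemma Bk_supp: "(b, h) \<in> Bk k \<Longrightarrow> i \<ge> k \<Longrightarrow> b i = 0"
  unfolding Bk_def by auto

lemma rot0: "(\<forall>i\<ge>k. b i = 0) \<Longrightarrow> rot k 0 b = b"
  unfolding rot_def by auto

lemma bmon_one_left: "q \<in> Bk k \<Longrightarrow> bmon k ((\<lambda>_. 0), 0) q = q"
  unfolding bmon_def Bk_def by (auto simp: rot0)

lemma bmon_one_right: "p \<in> Bk k \<Longrightarrow> bmon k p ((\<lambda>_. 0), 0) = p"
  unfolding bmon_def Bk_def by (auto simp: rot_zero)

lemma bsign_one_left: "bsign k ((\<lambda>_. 0), 0) q = 1"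
proof -
  obtain b h where q: "q = (b, h)" by fastforce
  have e: "{(i, j). i < j \<and> j < k \<and> j mod k < i mod k} = ({}::(nat\<times>nat) set)" by auto
  show ?thesis unfolding q bsign_def mono_sign_def rot_sign_def by (simp add: e)
qed

lemma bsign_one_right: "bsign k p ((\<lambda>_. 0), 0) = 1"
proof -
  obtain a g where p: "p = (a, g)" by fastforce
  show ?thesis unfolding p bsign_def mono_sign_def rot_sign_def by (simp add: rot_zero)
qed

lemma mul_one_left:
  fixes f :: "mon \<Rightarrow> 'a::comm_ring_1"
  assumes "supp f \<subseteq> Bk k" and fin: "finite (supp f)"
  shows "mul k one f = f"
proof
  fix c
  have "mul k one f c = (\<Sum>q\<in>supp f. if q = c then f q else 0)"
  proof -
    have "mul k one f c = (\<Sum>q\<in>supp f. if bmon k ((\<lambda>_. 0), 0) q = c then bsign k ((\<lambda>_. 0), 0) q * dlt ((\<lambda>_. 0), 0) ((\<lambda>_. 0), 0) * f q else 0)"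
      unfolding mul_def one_dlt supp_dlt by simp
    also have "\<dots> = (\<Sum>q\<in>supp f. if q = c then f q else 0)"
      by (rule sum.cong[OF refl]) (use assms in \<open>auto simp: bmon_one_left bsign_one_left dlt_def\<close>)
    finally show ?thesis .
  qed
  also have "\<dots> = f c" using fin by (simp add: sum.delta) (simp add: supp_def)
  finally show "mul k one f c = f c" .
qed

lemma mul_one_right:
  fixes f :: "mon \<Rightarrow> 'a::comm_ring_1"
  assumes "supp f \<subseteq> Bk k" and fin: "finite (supp f)"
  shows "mul k f one = f"
proof
  fix c
  have "mul k f one c = (\<Sum>q\<in>supp f. if q = c then f q else 0)"
  proof -
    have "mul k f one c = (\<Sum>q\<in>supp f. if bmon k q ((\<lambda>_. 0), 0) = c then bsign k q ((\<lambda>_. 0), 0) * f q * dlt ((\<lambda>_. 0), 0) ((\<lambda>_. 0), 0) else 0)"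
      unfolding mul_def one_dlt supp_dlt by simp
    also have "\<dots> = (\<Sum>q\<in>supp f. if q = c then f q else 0)"
      by (rule sum.cong[OF refl]) (use assms in \<open>auto simp: bmon_one_right bsign_one_right dlt_def\<close>)
    finally show ?thesis .
  qed
  also have "\<dots> = f c" using fin by (simp add: sum.delta) (simp add: supp_def)
  finally show "mul k f one c = f c" .
qed

lemma bmon_Bk: assumes "p \<in> Bk k" "q \<in> Bk k" shows "bmon k p q \<in> Bk k"
proof -
  obtain a g where p: "p = (a, g)" by fastforce
  obtain b h where q: "q = (b, h)" by fastforce
  have k: "k > 0" using assms(1) unfolding p Bk_def by auto
  show ?thesis using assms k unfolding p q Bk_def bmon_def by (auto simp: rot_def)
qed

lemma Alg_mul: assumes "f \<in> Alg k" "g \<in> Alg k" shows "mul k f g \<in> Alg k"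
proof -
  have F: "finite (supp f)" "finite (supp g)" using assms unfolding Alg_def by auto
  have s: "supp (mul k f g) \<subseteq> (\<lambda>(p,q). bmon k p q) ` (supp f \<times> supp g)" by (rule supp_mul[OF F])
  also have "\<dots> \<subseteq> Bk k" using assms unfolding Alg_def by (auto intro!: bmon_Bk)
  finally show ?thesis unfolding Alg_def using finite_supp_mul[OF F] by simp
qed

lemma Alg_lin:
  fixes f :: "'i \<Rightarrow> mon \<Rightarrow> 'a::comm_ring_1"
  assumes "finite I" "\<forall>i\<in>I. f i \<in> Alg k" shows "(\<lambda>x. \<Sum>i\<in>I. c i * f i x) \<in> Alg k"
proof -
  have "supp (\<lambda>x. \<Sum>i\<in>I. c i * f i x) \<subseteq> (\<Union>i\<in>I. supp (f i))" by (rule supp_lin)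
  moreover have "finite (\<Union>i\<in>I. supp (f i))" using assms unfolding Alg_def by auto
  moreover have "(\<Union>i\<in>I. supp (f i)) \<subseteq> Bk k" using assms unfolding Alg_def by auto
  ultimately show ?thesis unfolding Alg_def by (auto intro: finite_subset)
qed

lemma Alg_add: fixes f g :: "mon \<Rightarrow> 'a::comm_ring_1" assumes "f \<in> Alg k" "g \<in> Alg k" shows "(\<lambda>x. f x + g x) \<in> Alg k"
proof -
  have "supp (\<lambda>x. f x + g x) \<subseteq> supp f \<union> supp g" unfolding supp_def by auto
  then show ?thesis using assms unfolding Alg_def by (auto intro: finite_subset)
qed

lemma Alg_zero: "(\<lambda>_. 0) \<in> Alg k" by (simp add: Alg_def supp_zero)

lemma dlt_Alg: "p \<in> Bk k \<Longrightarrow> (dlt p :: mon \<Rightarrow> 'a::zero_neq_one) \<in> Alg k"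
  by (simp add: Alg_def supp_dlt)

lemma one_Alg: "k > 0 \<Longrightarrow> (one :: mon \<Rightarrow> 'a::zero_neq_one) \<in> Alg k"
  unfolding one_dlt by (rule dlt_Alg) (simp add: Bk_def)

lemma e0_decomp: "(e0 k :: mon \<Rightarrow> 'a::field) = (\<lambda>x. \<Sum>t<k. inverse (of_nat k) * dlt ((\<lambda>_. 0), t) x)"
proof
  fix x
  show "(e0 k x :: 'a) = (\<Sum>t<k. inverse (of_nat k) * dlt ((\<lambda>_. 0), t) x)"
  proof (cases "\<exists>g<k. x = ((\<lambda>_. 0), g)")
    case True
    then obtain g where g: "g < k" "x = ((\<lambda>_. 0), g)" by blast
    have "(\<Sum>t<k. inverse (of_nat k) * dlt ((\<lambda>_. 0), t) x) = (\<Sum>t<k. if g = t then inverse (of_nat k) else 0)"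
      by (rule sum.cong) (auto simp: dlt_def g)
    also have "\<dots> = inverse (of_nat k)" using g by simp
    finally have 1: "(\<Sum>t<k. inverse (of_nat k) * dlt ((\<lambda>_. 0), t) x) = (inverse (of_nat k) :: 'a)" .
    have "(e0 k x :: 'a) = inverse (of_nat k)" using g by (auto simp: e0_def)
    then show ?thesis using 1 by argo
  next
    case False
    then have "\<forall>t<k. dlt ((\<lambda>_. 0), t) x = (0::'a)" by (auto simp: dlt_def)
    then show ?thesis using False by (auto simp: e0_def)
  qed
qed

lemma e0_Alg: "k > 0 \<Longrightarrow> (e0 k :: mon \<Rightarrow> 'a::field) \<in> Alg k"
  unfolding e0_decomp by (rule Alg_lin) (auto intro!: dlt_Alg simp: Bk_def)

lemma ideal_Alg: fixes e :: "mon \<Rightarrow> 'a::comm_ring_1" assumes "e \<in> Alg k" "x \<in> gen_ideal k e" shows "x \<in> Alg k"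
  using assms(2) by induct (auto intro: assms(1) Alg_zero Alg_add Alg_mul)

lemma Alg_fin: "f \<in> Alg k \<Longrightarrow> finite (supp f)" unfolding Alg_def by simp
lemma Alg_Bk: "f \<in> Alg k \<Longrightarrow> supp f \<subseteq> Bk k" unfolding Alg_def by simp

lemma ideal_scale:
  fixes e :: "mon \<Rightarrow> 'a::comm_ring_1"
  assumes k: "k > 0" and e: "e \<in> Alg k" and x: "x \<in> gen_ideal k e"
  shows "(\<lambda>y. c * x y) \<in> gen_ideal k e"
proof -
  have xA: "x \<in> Alg k" by (rule ideal_Alg[OF e x])
  have oA: "(one :: mon \<Rightarrow> 'a) \<in> Alg k" by (rule one_Alg[OF k])
  have cA: "(\<lambda>y. c * one y) \<in> Alg k" using Alg_lin[of "{0::nat}" "\<lambda>_. one" k "\<lambda>_. c"] oA by simp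
  have "mul k (\<lambda>y. c * one y) x \<in> gen_ideal k e" by (rule gen_ideal.lmul[OF x cA])
  also have "mul k (\<lambda>y. c * one y) x = (\<lambda>y. c * mul k one x y)"
    by (rule mul_scale_left) (use oA xA in \<open>auto dest: Alg_fin\<close>)
  also have "mul k one x = x" by (rule mul_one_left) (use xA in \<open>auto dest: Alg_fin Alg_Bk\<close>)
  finally show ?thesis .
qed

lemma ideal_lin:
  fixes e :: "mon \<Rightarrow> 'a::comm_ring_1"
  assumes k: "k > 0" and e: "e \<in> Alg k" and I: "finite I" and x: "\<forall>i\<in>I. x i \<in> gen_ideal k e"
  shows "(\<lambda>y. \<Sum>i\<in>I. c i * x i y) \<in> gen_ideal k e"
  using I x
proof (induct I rule: finite_induct)
  case empty then show ?case by (simp add: gen_ideal.zero)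
next
  case (insert i I)
  have 1: "(\<lambda>y. c i * x i y) \<in> gen_ideal k e" using insert by (intro ideal_scale[OF k e]) simp
  have 2: "(\<lambda>y. \<Sum>i\<in>I. c i * x i y) \<in> gen_ideal k e" using insert by simp
  show ?case using gen_ideal.add[OF 1 2] insert by simp
qed

lemma mul_dlt_dlt': "mul k (dlt p) (dlt q) = (\<lambda>x. (bsign k p q :: 'a::comm_ring_1) * dlt (bmon k p q) x)"
  by (rule mul_dlt_dlt)

lemma bsign_00: "bsign k ((\<lambda>_. 0), g) ((\<lambda>_. 0), t) = (1::'a::comm_ring_1)"
  unfolding bsign_def mono_sign_def rot_sign_def by (simp add: rot_zero)

lemma bmon_00: "bmon k ((\<lambda>_. 0), g) ((\<lambda>_. 0), t) = ((\<lambda>_. 0), (g + t) mod k)"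
  unfolding bmon_def by (simp add: rot_zero)

lemma dlt_left_e0:
  assumes k: "k > 0"
  shows "mul k (dlt ((\<lambda>_. 0), g)) (e0 k) = (e0 k :: mon \<Rightarrow> 'a::field)"
proof
  fix y
  have "mul k (dlt ((\<lambda>_. 0), g)) (e0 k) y = (\<Sum>t<k. inverse (of_nat k) * mul k (dlt ((\<lambda>_. 0), g)) (dlt ((\<lambda>_. 0), t)) y)"
    unfolding e0_decomp
    by (rule mul_lin_right[where A="(\<lambda>t. ((\<lambda>_. 0), t)) ` {..<k}"]) (auto simp: supp_dlt)
  also have "\<dots> = (\<Sum>t<k. inverse (of_nat k) * dlt ((\<lambda>_. 0), (t + g) mod k) y)"
    by (simp add: mul_dlt_dlt bsign_00 bmon_00 add.commute)
  also have "\<dots> = (\<Sum>t<k. inverse (of_nat k) * dlt ((\<lambda>_. 0), t) y)"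
    by (rule sum_rot[OF k, of "\<lambda>t. inverse (of_nat k) * dlt ((\<lambda>_. 0), t) y" g])
  also have "\<dots> = e0 k y" unfolding e0_decomp ..
  finally show "mul k (dlt ((\<lambda>_. 0), g)) (e0 k) y = e0 k y" .
qed

lemma dlt_right_e0:
  assumes k: "k > 0"
  shows "mul k (e0 k) (dlt ((\<lambda>_. 0), h)) = (e0 k :: mon \<Rightarrow> 'a::field)"
proof
  fix y
  have "mul k (e0 k) (dlt ((\<lambda>_. 0), h)) y = (\<Sum>t<k. inverse (of_nat k) * mul k (dlt ((\<lambda>_. 0), t)) (dlt ((\<lambda>_. 0), h)) y)"
    unfolding e0_decomp
    by (rule mul_lin_left[where A="(\<lambda>t. ((\<lambda>_. 0), t)) ` {..<k}"]) (auto simp: supp_dlt)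
  also have "\<dots> = (\<Sum>t<k. inverse (of_nat k) * dlt ((\<lambda>_. 0), (t + h) mod k) y)"
    by (simp add: mul_dlt_dlt bsign_00 bmon_00)
  also have "\<dots> = (\<Sum>t<k. inverse (of_nat k) * dlt ((\<lambda>_. 0), t) y)"
    by (rule sum_rot[OF k, of "\<lambda>t. inverse (of_nat k) * dlt ((\<lambda>_. 0), t) y" h])
  also have "\<dots> = e0 k y" unfolding e0_decomp ..
  finally show "mul k (e0 k) (dlt ((\<lambda>_. 0), h)) y = e0 k y" .
qed

lemma dlt_split_left:
  "mul k (dlt (a, 0)) (dlt ((\<lambda>_. 0), g)) = (dlt (a, g mod k) :: mon \<Rightarrow> 'a::comm_ring_1)"
proof -
  have "bsign k (a, 0) ((\<lambda>_. 0), g) = (1::'a)"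
    unfolding bsign_def mono_sign_def rot_sign_def by (simp add: rot_zero)
  moreover have "bmon k (a, 0) ((\<lambda>_. 0), g) = (a, g mod k)"
    unfolding bmon_def by (simp add: rot_zero)
  ultimately show ?thesis by (simp add: mul_dlt_dlt)
qed

lemma dlt_split_right:
  assumes b: "(b, h) \<in> Bk k"
  shows "\<exists>b' s. (b', 0) \<in> Bk k \<and> (s = 1 \<or> s = -1) \<and>
    (dlt (b, h) :: mon \<Rightarrow> 'a::comm_ring_1) = (\<lambda>x. s * mul k (dlt ((\<lambda>_. 0), h)) (dlt (b', 0)) x)"
proof -
  have hk: "h < k" and bs: "\<forall>i\<ge>k. b i = 0" using b unfolding Bk_def by auto
  define b' where "b' = rot k (k - h) b"
  have b'B: "(b', 0) \<in> Bk k" using hk unfolding b'_def Bk_def by (auto simp: rot_def)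
  have "rot k h b' = rot k ((h + (k - h)) mod k) b" unfolding b'_def by (simp add: rot_rot)
  also have "(h + (k - h)) mod k = 0" using hk by simp
  finally have rb: "rot k h b' = b" using rot0[OF bs] by simp
  define s :: 'a where "s = rot_sign k h b'"
  have pm: "\<And>n. (-1::'a)^n = 1 \<or> (-1::'a)^n = -1" by (metis neg_one_even_power neg_one_odd_power)
  have s1: "s = 1 \<or> s = -1" unfolding s_def rot_sign_def by (rule pm)
  have ss: "s * s = 1" using s1 by auto
  have bm: "bmon k ((\<lambda>_. 0), h) (b', 0) = (b, h)" unfolding bmon_def using rb hk by simp
  have bsg: "bsign k ((\<lambda>_. 0), h) (b', 0) = s"
    unfolding bsign_def s_def mono_sign_def by simp
  have "(\<lambda>x. s * mul k (dlt ((\<lambda>_. 0), h)) (dlt (b', 0)) x) = (\<lambda>x. s * (s * dlt (b, h) x))"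
    by (simp add: mul_dlt_dlt bm bsg)
  also have "\<dots> = dlt (b, h)" using ss by (simp add: mult.assoc[symmetric])
  finally show ?thesis using b'B s1 by metis
qed

definition spread :: "nat \<Rightarrow> (nat \<Rightarrow> nat) \<Rightarrow> (nat \<Rightarrow> nat)" where
  "spread d a = (\<lambda>i. if d dvd i then a (i div d) else 0)"

definition imon :: "nat \<Rightarrow> mon \<Rightarrow> mon" where
  "imon d p = (spread d (fst p), snd p * d)"

definition sq :: "nat \<Rightarrow> mon \<Rightarrow> mon" where
  "sq d c = ((\<lambda>l. fst c (l * d)), snd c div d)"

definition iota :: "nat \<Rightarrow> (mon \<Rightarrow> 'a::zero) \<Rightarrow> (mon \<Rightarrow> 'a)" where
  "iota d f = (\<lambda>c. if c = imon d (sq d c) then f (sq d c) else 0)"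

definition proj :: "nat \<Rightarrow> (mon \<Rightarrow> 'a) \<Rightarrow> (mon \<Rightarrow> 'a)" where
  "proj d f = (\<lambda>p. f (imon d p))"

lemma sq_imon: "d > 0 \<Longrightarrow> sq d (imon d p) = p"
  unfolding sq_def imon_def spread_def by (cases p) auto

lemma imon_inj: "d > 0 \<Longrightarrow> imon d p = imon d q \<Longrightarrow> p = q"
  by (metis sq_imon)

lemma iota_imon: "d > 0 \<Longrightarrow> iota d f (imon d p) = f p"
  unfolding iota_def by (simp add: sq_imon)

lemma proj_iota: "d > 0 \<Longrightarrow> proj d (iota d f) = f"
  unfolding proj_def by (simp add: iota_imon)

lemma iota_range: "iota d f c \<noteq> 0 \<Longrightarrow> c = imon d (sq d c) \<and> f (sq d c) \<noteq> 0"
  unfolding iota_def by (auto split: if_splits)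

lemma supp_iota: assumes "d > 0" shows "supp (iota d f) = imon d ` supp f"
proof
  show "supp (iota d f) \<subseteq> imon d ` supp f"
  proof
    fix c assume "c \<in> supp (iota d f)"
    then have "iota d f c \<noteq> 0" by (simp add: supp_def)
    then have h: "c = imon d (sq d c) \<and> f (sq d c) \<noteq> 0" by (rule iota_range)
    then have "sq d c \<in> supp f" by (simp add: supp_def)
    then show "c \<in> imon d ` supp f" using h by (metis image_eqI)
  qed
  show "imon d ` supp f \<subseteq> supp (iota d f)"
  proof
    fix c assume "c \<in> imon d ` supp f"
    then obtain p where p: "p \<in> supp f" "c = imon d p" by auto
    then show "c \<in> supp (iota d f)" using iota_imon[OF assms, of f p] by (simp add: supp_def)
  qed
qed

lemma inj_imon: "d > 0 \<Longrightarrow> inj_on (imon d) A"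
  by (auto intro: inj_onI imon_inj)

lemma sum_spread:
  fixes d m :: nat
  assumes d: "d > 0" and z: "\<forall>i<m*d. \<not> d dvd i \<longrightarrow> F i = 0"
  shows "(\<Sum>i<m*d. F i) = (\<Sum>l<m. F (l*d))"
proof -
  have sub: "(\<lambda>l. l*d) ` {..<m} \<subseteq> {..<m*d}" using d by (auto intro: mult_less_mono1)
  have "(\<Sum>i<m*d. F i) = (\<Sum>i\<in>(\<lambda>l. l*d) ` {..<m}. F i)"
  proof (rule sum.mono_neutral_right[OF _ sub])
    show "finite {..<m*d}" by simp
    show "\<forall>i\<in>{..<m*d} - (\<lambda>l. l*d) ` {..<m}. F i = 0"
    proof
      fix i assume i: "i \<in> {..<m*d} - (\<lambda>l. l*d) ` {..<m}"
      have "\<not> d dvd i"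
      proof
        assume "d dvd i"
        then obtain l where l: "i = l*d" by (auto simp: dvd_def mult.commute)
        then have "l < m" using i d by auto
        then show False using i l by auto
      qed
      then show "F i = 0" using z i by auto
    qed
  qed
  also have "\<dots> = (\<Sum>l<m. F (l*d))"
    by (subst sum.reindex) (use d in \<open>auto intro: inj_onI\<close>)
  finally show ?thesis .
qed

lemma bet_spread:
  assumes d: "d > 0"
  shows "bet (m*d) (spread d a) (spread d c) = bet m a c"
proof -
  have "bet (m*d) (spread d a) (spread d c) = (\<Sum>l<m. \<Sum>j<m*d. if j < l*d then spread d a (l*d) * spread d c j else 0)"
    unfolding bet_def by (rule sum_spread[OF d]) (auto simp: spread_def intro!: sum.neutral)
  also have "\<dots> = (\<Sum>l<m. \<Sum>l'<m. if l'*d < l*d then spread d a (l*d) * spread d c (l'*d) else 0)"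
    by (rule sum.cong[OF refl], rule sum_spread[OF d]) (auto simp: spread_def)
  also have "\<dots> = bet m a c"
    unfolding bet_def spread_def using d by (simp cong: if_cong)
  finally show ?thesis .
qed

lemma mod_md: "(d::nat) > 0 \<Longrightarrow> (x*d) mod (m*d) = (x mod m) * d"
  by (rule mod_mult_mult2)

lemma rho_spread:
  assumes d: "d > 0" and g: "g < m"
  shows "rho (m*d) (g*d) (spread d b) = rho m g b"
proof -
  have "rho (m*d) (g*d) (spread d b) = (\<Sum>l<m. \<Sum>j<m*d. if l*d < j \<and> (j + g*d) mod (m*d) < (l*d + g*d) mod (m*d) then spread d b (l*d) * spread d b j else 0)"
    unfolding rho_def by (rule sum_spread[OF d]) (auto simp: spread_def intro!: sum.neutral)
  also have "\<dots> = (\<Sum>l<m. \<Sum>l'<m. if l*d < l'*d \<and> (l'*d + g*d) mod (m*d) < (l*d + g*d) mod (m*d) then spread d b (l*d) * spread d b (l'*d) else 0)"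
    by (rule sum.cong[OF refl], rule sum_spread[OF d]) (auto simp: spread_def)
  also have "\<dots> = (\<Sum>l<m. \<Sum>l'<m. if l < l' \<and> (l' + g) mod m < (l + g) mod m then b l * b l' else 0)"
  proof (intro sum.cong refl)
    fix l l'
    have e1: "(l'*d + g*d) mod (m*d) = ((l' + g) mod m) * d" using mod_md[OF d, of "l'+g" m] by (simp add: algebra_simps)
    have e2: "(l*d + g*d) mod (m*d) = ((l + g) mod m) * d" using mod_md[OF d, of "l+g" m] by (simp add: algebra_simps)
    show "(if l*d < l'*d \<and> (l'*d + g*d) mod (m*d) < (l*d + g*d) mod (m*d) then spread d b (l*d) * spread d b (l'*d) else 0) =
      (if l < l' \<and> (l' + g) mod m < (l + g) mod m then b l * b l' else 0)"
      unfolding e1 e2 spread_def using d by simp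
  qed
  also have "\<dots> = rho m g b" unfolding rho_def ..
  finally show ?thesis .
qed

lemma rot_spread:
  assumes d: "d > 0" and g: "g < m"
  shows "rot (m*d) (g*d) (spread d b) = spread d (rot m g b)"
proof
  fix j
  show "rot (m*d) (g*d) (spread d b) j = spread d (rot m g b) j"
  proof (cases "j < m*d")
    case False
    then have "\<not> (d dvd j \<and> j div d < m)" using d
      by (metis dvd_mult_div_cancel mult.commute mult_less_cancel2)
    then show ?thesis using False unfolding rot_def spread_def by auto
  next
    case True
    have gdm: "(g*d) mod (m*d) = g*d" using g d by simp
    have le: "g*d \<le> m*d" using g by simp
    define x where "x = j + m*d - g*d"
    have x: "x = j + (m - g)*d" unfolding x_def using le by (simp add: diff_mult_distrib)
    have dx: "d dvd x \<longleftrightarrow> d dvd j" unfolding x by (simp add: dvd_add_left_iff)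
    have dxm: "d dvd (x mod (m*d)) \<longleftrightarrow> d dvd x" by (simp add: dvd_mod_iff)
    have lhs: "rot (m*d) (g*d) (spread d b) j = spread d b (x mod (m*d))"
      unfolding rot_def x_def using True g by (simp add: mult.commute)
    show ?thesis
    proof (cases "d dvd j")
      case False
      then show ?thesis unfolding lhs using dx dxm by (simp add: spread_def)
    next
      case dj: True
      then obtain l where l: "j = l*d" by (auto simp: dvd_def mult.commute)
      have lm: "l < m" using True l d by simp
      have "x = (l + m - g) * d" unfolding x l using g by (simp add: algebra_simps diff_mult_distrib)
      then have xm: "x mod (m*d) = ((l + m - g) mod m) * d" using mod_md[OF d] by simp
      have r: "rot m g b l = b ((l + m - g) mod m)" unfolding rot_def using lm g by simp
      have lhs': "rot (m*d) (g*d) (spread d b) (l*d) = spread d b (((l + m - g) mod m) * d)"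
        using lhs xm l by simp
      show ?thesis unfolding l lhs' using r d by (simp add: spread_def)
    qed
  qed
qed

lemma imon_Bk: assumes d: "d > 0" and p: "p \<in> Bk m" shows "imon d p \<in> Bk (m*d)"
proof -
  obtain a g where pp: "p = (a, g)" by fastforce
  have g: "g < m" and a: "\<forall>i\<ge>m. a i = 0" using p unfolding pp Bk_def by auto
  have "\<forall>i\<ge>m*d. spread d a i = 0"
  proof (intro allI impI)
    fix i assume i: "i \<ge> m*d"
    show "spread d a i = 0"
    proof (cases "d dvd i")
      case True
      then obtain l where "i = l*d" by (auto simp: dvd_def mult.commute)
      then have "l \<ge> m" using i d by simp
      then show ?thesis using a True \<open>i = l*d\<close> d by (simp add: spread_def)
    qed (simp add: spread_def)
  qed
  then show ?thesis unfolding pp imon_def Bk_def using g d by simp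
qed

lemma bmon_imon:
  assumes d: "d > 0" and p: "p \<in> Bk m" and q: "q \<in> Bk m"
  shows "bmon (m*d) (imon d p) (imon d q) = imon d (bmon m p q)"
proof -
  obtain a g where pp: "p = (a, g)" by fastforce
  obtain b h where qq: "q = (b, h)" by fastforce
  have g: "g < m" using p unfolding pp Bk_def by auto
  have e: "(g*d + h*d) mod (m*d) = ((g+h) mod m) * d" using mod_md[OF d, of "g+h" m] by (simp add: algebra_simps)
  have s: "(\<lambda>i. spread d a i + spread d (rot m g b) i) = spread d (\<lambda>i. a i + rot m g b i)"
    unfolding spread_def by auto
  show ?thesis unfolding pp qq imon_def bmon_def using rot_spread[OF d g] e s by simp
qed

lemma bsign_imon:
  assumes d: "d > 0" and p: "p \<in> Bk m"
  shows "bsign (m*d) (imon d p) (imon d q) = (bsign m p q :: 'a::ring_1)"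
proof -
  obtain a g where pp: "p = (a, g)" by fastforce
  obtain b h where qq: "q = (b, h)" by fastforce
  have g: "g < m" using p unfolding pp Bk_def by auto
  show ?thesis unfolding pp qq imon_def bsign_def
    by (simp add: rot_spread[OF d g] mono_sign_bet rot_sign_rho bet_spread[OF d] rho_spread[OF d g])
qed

lemma iota_mul:
  fixes f g :: "mon \<Rightarrow> 'a::comm_ring_1"
  assumes d: "d > 0" and F: "finite (supp f)" "supp f \<subseteq> Bk m" and G: "finite (supp g)" "supp g \<subseteq> Bk m"
  shows "iota d (mul m f g) = mul (m*d) (iota d f) (iota d g)"
proof
  fix c
  have "mul (m*d) (iota d f) (iota d g) c = (\<Sum>p'\<in>imon d ` supp f. \<Sum>q'\<in>imon d ` supp g.
      if bmon (m*d) p' q' = c then bsign (m*d) p' q' * iota d f p' * iota d g q' else 0)"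
    unfolding mul_def supp_iota[OF d] ..
  also have "\<dots> = (\<Sum>p\<in>supp f. \<Sum>q\<in>supp g.
      if bmon (m*d) (imon d p) (imon d q) = c then bsign (m*d) (imon d p) (imon d q) * iota d f (imon d p) * iota d g (imon d q) else 0)"
  proof -
    have i: "inj_on (imon d) A" for A by (rule inj_imon[OF d])
    show ?thesis
      by (subst sum.reindex[OF i], unfold comp_def, rule sum.cong[OF refl], subst sum.reindex[OF i], unfold comp_def, rule refl)
  qed
  also have "\<dots> = (\<Sum>p\<in>supp f. \<Sum>q\<in>supp g.
      if imon d (bmon m p q) = c then bsign m p q * f p * g q else 0)"
  proof (intro sum.cong refl)
    fix p q assume p: "p \<in> supp f" and q: "q \<in> supp g"
    have pB: "p \<in> Bk m" and qB: "q \<in> Bk m" using p q F G by auto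
    show "(if bmon (m*d) (imon d p) (imon d q) = c then bsign (m*d) (imon d p) (imon d q) * iota d f (imon d p) * iota d g (imon d q) else 0) =
      (if imon d (bmon m p q) = c then bsign m p q * f p * g q else 0)"
      by (simp add: bmon_imon[OF d pB qB] bsign_imon[OF d pB] iota_imon[OF d])
  qed
  also have "\<dots> = iota d (mul m f g) c"
  proof (cases "c = imon d (sq d c)")
    case True
    have "iota d (mul m f g) c = mul m f g (sq d c)" unfolding iota_def using True by simp
    also have "\<dots> = (\<Sum>p\<in>supp f. \<Sum>q\<in>supp g. if bmon m p q = sq d c then bsign m p q * f p * g q else 0)"
      unfolding mul_def ..
    also have "\<dots> = (\<Sum>p\<in>supp f. \<Sum>q\<in>supp g. if imon d (bmon m p q) = c then bsign m p q * f p * g q else 0)"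
    proof (intro sum.cong refl)
      fix p q
      have "(imon d (bmon m p q) = c) = (bmon m p q = sq d c)"
      proof
        assume "imon d (bmon m p q) = c"
        then show "bmon m p q = sq d c" using sq_imon[OF d, of "bmon m p q"] by simp
      next
        assume "bmon m p q = sq d c"
        then show "imon d (bmon m p q) = c" using True by simp
      qed
      then show "(if bmon m p q = sq d c then bsign m p q * f p * g q else 0) = (if imon d (bmon m p q) = c then bsign m p q * f p * g q else 0)"
        by simp
    qed
    finally show ?thesis by simp
  next
    case False
    have "\<And>x. imon d x \<noteq> c"
    proof
      fix x assume "imon d x = c"
      then have "sq d c = x" using sq_imon[OF d, of x] by simp
      then show False using False \<open>imon d x = c\<close> by simp
    qed
    then show ?thesis using False unfolding iota_def by simp
  qed
  finally show "iota d (mul m f g) c = mul (m*d) (iota d f) (iota d g) c" by simp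
qed

lemma iota_lin:
  fixes f :: "'i \<Rightarrow> mon \<Rightarrow> 'a::comm_ring_1"
  shows "iota d (\<lambda>x. \<Sum>i\<in>I. c i * f i x) = (\<lambda>x. \<Sum>i\<in>I. c i * iota d (f i) x)"
  unfolding iota_def by auto

lemma imon_00: "imon d ((\<lambda>_. 0), 0) = ((\<lambda>_. 0), 0)"
  unfolding imon_def spread_def by auto

lemma iota_one: assumes d: "d > 0" shows "iota d one = (one :: mon \<Rightarrow> 'a::zero_neq_one)"
proof
  fix c
  show "iota d one c = (one c :: 'a)"
  proof (cases "c = imon d (sq d c)")
    case True
    have "(sq d c = ((\<lambda>_. 0), 0)) = (c = ((\<lambda>_. 0), 0))"
    proof
      assume "sq d c = ((\<lambda>_. 0), 0)"
      then show "c = ((\<lambda>_. 0), 0)" using True imon_00[of d] by simp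
    next
      assume "c = ((\<lambda>_. 0), 0)"
      then show "sq d c = ((\<lambda>_. 0), 0)" using sq_imon[OF d, of "((\<lambda>_. 0), 0)"] imon_00[of d] by simp
    qed
    then show ?thesis unfolding iota_def using True by (simp add: one_def)
  next
    case False
    have "c \<noteq> ((\<lambda>_. 0), 0)"
    proof
      assume c: "c = ((\<lambda>_. 0), 0)"
      then have "sq d c = ((\<lambda>_. 0), 0)" using sq_imon[OF d, of "((\<lambda>_. 0), 0)"] imon_00[of d] by simp
      then show False using False c imon_00[of d] by simp
    qed
    then show ?thesis unfolding iota_def using False by (simp add: one_def)
  qed
qed

lemma iota_Alg: assumes d: "d > 0" and f: "f \<in> Alg m" shows "iota d f \<in> Alg (m*d)"
proof -
  have e: "supp (iota d f) = imon d ` supp f" by (rule supp_iota[OF d])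
  show ?thesis using f imon_Bk[OF d] by (auto simp: Alg_def e)
qed

lemma prodl_Alg: assumes k: "k > 0" shows "set xs \<subseteq> Alg k \<Longrightarrow> prodl k xs \<in> (Alg k :: (mon \<Rightarrow> 'a::comm_ring_1) set)"
  by (induct xs) (auto simp: prodl_def one_Alg[OF k] intro!: Alg_mul)

lemma iota_prodl:
  assumes d: "d > 0" and m: "m > 0"
  shows "set xs \<subseteq> (Alg m :: (mon \<Rightarrow> 'a::comm_ring_1) set) \<Longrightarrow> iota d (prodl m xs) = prodl (m*d) (map (iota d) xs)"
proof (induct xs)
  case Nil then show ?case by (simp add: prodl_def iota_one[OF d])
next
  case (Cons x xs)
  have xA: "x \<in> Alg m" and xsA: "set xs \<subseteq> Alg m" using Cons by auto
  have pA: "prodl m xs \<in> Alg m" by (rule prodl_Alg[OF m xsA])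
  have "iota d (prodl m (x # xs)) = iota d (mul m x (prodl m xs))" by (simp add: prodl_def)
  also have "\<dots> = mul (m*d) (iota d x) (iota d (prodl m xs))"
    by (rule iota_mul[OF d]) (use xA pA in \<open>auto simp: Alg_def\<close>)
  also have "\<dots> = prodl (m*d) (map (iota d) (x # xs))" using Cons xsA by (simp add: prodl_def)
  finally show ?case .
qed

lemma iota_filt:
  assumes d: "d > 0" and m: "m > 0" and FA: "F \<subseteq> (Alg m :: (mon \<Rightarrow> 'a::comm_ring_1) set)" and s: "s \<in> filt m F k"
  shows "iota d s \<in> filt (m*d) (iota d ` F) k"
proof -
  obtain T c where s': "s = (\<lambda>p. \<Sum>t\<in>T. c t * t p)" and T: "finite T" "T \<subseteq> {prodl m xs | xs. set xs \<subseteq> F \<and> length xs \<le> k}"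
    using s unfolding filt_def lin_span_def by auto
  have inj: "inj_on (iota d) T" by (rule inj_on_inverseI[where g="proj d"]) (simp add: proj_iota[OF d])
  have "iota d s = (\<lambda>p. \<Sum>t\<in>T. c t * iota d t p)" unfolding s' by (rule iota_lin)
  also have "\<dots> = (\<lambda>p. \<Sum>t'\<in>iota d ` T. c (proj d t') * t' p)"
    by (rule ext) (simp add: sum.reindex[OF inj] proj_iota[OF d])
  finally have e: "iota d s = (\<lambda>p. \<Sum>t'\<in>iota d ` T. c (proj d t') * t' p)" .
  have sub: "iota d ` T \<subseteq> {prodl (m*d) ys | ys. set ys \<subseteq> iota d ` F \<and> length ys \<le> k}"
  proof
    fix t' assume "t' \<in> iota d ` T"
    then obtain t where t: "t \<in> T" "t' = iota d t" by auto
    then obtain xs where xs0: "set xs \<subseteq> F" "length xs \<le> k" "t = prodl m xs" using T(2) by auto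
    have xs: "set xs \<subseteq> F" "length xs \<le> k" "t' = iota d (prodl m xs)" using xs0 t by auto
    have "t' = prodl (m*d) (map (iota d) xs)" using xs iota_prodl[OF d m, of xs] FA by auto
    then show "t' \<in> {prodl (m*d) ys | ys. set ys \<subseteq> iota d ` F \<and> length ys \<le> k}"
      using xs by (intro CollectI exI[of _ "map (iota d) xs"]) auto
  qed
  show ?thesis unfolding filt_def lin_span_def e
    by (rule CollectI, rule exI[of _ "iota d ` T"], rule exI[of _ "\<lambda>t'. c (proj d t')"]) (use T(1) sub in auto)
qed

lemma proj_lin: "proj d (\<lambda>p. \<Sum>s\<in>S. c s * f s p) = (\<lambda>q. \<Sum>s\<in>S. c s * proj d (f s) q)"
  unfolding proj_def ..

lemma iota_dlt: assumes d: "d > 0" shows "iota d (dlt p) = (dlt (imon d p) :: mon \<Rightarrow> 'a::zero_neq_one)"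
proof
  fix c
  show "iota d (dlt p) c = (dlt (imon d p) c :: 'a)"
  proof (cases "c = imon d (sq d c)")
    case True
    have "(sq d c = p) = (c = imon d p)"
    proof
      assume "sq d c = p" then show "c = imon d p" using True by simp
    next
      assume "c = imon d p" then show "sq d c = p" using sq_imon[OF d, of p] by simp
    qed
    then show ?thesis unfolding iota_def dlt_def using True by simp
  next
    case False
    have "c \<noteq> imon d p"
    proof
      assume "c = imon d p"
      then have "sq d c = p" using sq_imon[OF d, of p] by simp
      then show False using False \<open>c = imon d p\<close> by simp
    qed
    then show ?thesis unfolding iota_def dlt_def using False by simp
  qed
qed

lemma imon_range: assumes "z = imon d (sq d z)"
  shows "(\<forall>i. \<not> d dvd i \<longrightarrow> fst z i = 0) \<and> d dvd snd z"
proof -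
  have "fst z = spread d (fst (sq d z))" "snd z = snd (sq d z) * d"
    using assms unfolding imon_def by (metis fst_conv, metis snd_conv)
  then show ?thesis unfolding spread_def by auto
qed

lemma proj_sdlt: assumes d: "d > 0" and nr: "\<not> (z = imon d (sq d z))"
  shows "proj d (\<lambda>x. s * dlt z x) = (\<lambda>_. 0::'a::comm_ring_1)"
proof
  fix y
  have "imon d y \<noteq> z"
  proof
    assume "imon d y = z"
    then have "sq d z = y" using sq_imon[OF d, of y] by simp
    then show False using nr \<open>imon d y = z\<close> by simp
  qed
  then show "proj d (\<lambda>x. s * dlt z x) y = 0" unfolding proj_def dlt_def by simp
qed

lemma Zlin:
  assumes k: "k > 0"
  shows "mul k (mul k (dlt p) (e0 k)) (dlt q) =
    (\<lambda>y. \<Sum>t<k. inverse (of_nat k) * mul k (mul k (dlt p) (dlt ((\<lambda>_. 0), t))) (dlt q) y :: 'a::field)"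
proof -
  have s1: "mul k (dlt p) (e0 k) = (\<lambda>y. \<Sum>t<k. inverse (of_nat k) * mul k (dlt p) (dlt ((\<lambda>_. 0), t)) y :: 'a)"
  proof
    fix y
    show "mul k (dlt p) (e0 k) y = (\<Sum>t<k. inverse (of_nat k) * mul k (dlt p) (dlt ((\<lambda>_. 0), t)) y :: 'a)"
      unfolding e0_decomp
      by (rule mul_lin_right[where A="(\<lambda>t. ((\<lambda>_. 0), t)) ` {..<k}"]) (auto simp: supp_dlt)
  qed
  show ?thesis
  proof
    fix y
    show "mul k (mul k (dlt p) (e0 k)) (dlt q) y = (\<Sum>t<k. inverse (of_nat k) * mul k (mul k (dlt p) (dlt ((\<lambda>_. 0), t))) (dlt q) y :: 'a)"
      unfolding s1
    proof (rule mul_lin_left[where A="\<Union>t<k. supp (mul k (dlt p) (dlt ((\<lambda>_. 0), t)) :: mon \<Rightarrow> 'a)"])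
      show "finite (\<Union>t<k. supp (mul k (dlt p) (dlt ((\<lambda>_. 0), t)) :: mon \<Rightarrow> 'a))"
        by (auto intro!: finite_supp_mul simp: supp_dlt)
    qed (auto simp: supp_dlt)
  qed
qed

lemma W_formula:
  "mul k (mul k (dlt (a, 0)) (dlt ((\<lambda>_. 0), t))) (dlt (b, 0)) =
     (\<lambda>x. (bsign k (a, t mod k) (b, 0) :: 'a::comm_ring_1) * dlt (bmon k (a, t mod k) (b, 0)) x)"
  by (simp only: dlt_split_left) (simp add: mul_dlt_dlt)

lemma Zbase:
  fixes m d :: nat and a b :: "nat \<Rightarrow> nat"
  assumes m: "m > 0" and d: "d > 0" and aB: "(a, 0) \<in> Bk (m*d)" and bB: "(b, 0) \<in> Bk (m*d)"
  shows "proj d (mul (m*d) (mul (m*d) (dlt (a,0)) (e0 (m*d))) (dlt (b,0))) \<in> gen_ideal m (e0 m :: mon \<Rightarrow> 'a::field_char_0)"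
proof -
  define n where "n = m*d"
  have n: "n > 0" using m d by (simp add: n_def)
  have dn: "d dvd n" unfolding n_def by simp
  define W :: "nat \<Rightarrow> mon \<Rightarrow> 'a" where "W t = mul n (mul n (dlt (a,0)) (dlt ((\<lambda>_. 0),t))) (dlt (b,0))" for t
  have PZ: "proj d (mul n (mul n (dlt (a,0)) (e0 n)) (dlt (b,0))) = (\<lambda>y. \<Sum>t<n. inverse (of_nat n) * proj d (W t) y)"
    by (simp add: Zlin[OF n] W_def proj_def)
  have Wf: "W t = (\<lambda>x. bsign n (a, t mod n) (b, 0) * dlt (bmon n (a, t mod n) (b, 0)) x)" for t
    unfolding W_def by (rule W_formula)
  have bz: "\<And>i. i \<ge> n \<Longrightarrow> b i = 0" using bB unfolding Bk_def n_def by auto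
  have az: "\<And>i. i \<ge> n \<Longrightarrow> a i = 0" using aB unfolding Bk_def n_def by auto
  show ?thesis
  proof (cases "(\<forall>i. \<not> d dvd i \<longrightarrow> a i = 0) \<and> (\<forall>i. \<not> d dvd i \<longrightarrow> b i = 0)")
    case True
    define ah where "ah = (\<lambda>l. a (l*d))"
    define bh where "bh = (\<lambda>l. b (l*d))"
    have ah: "spread d ah = a" using True unfolding ah_def spread_def
      by (auto simp: fun_eq_iff dvd_div_mult_self)
    have bh: "spread d bh = b" using True unfolding bh_def spread_def
      by (auto simp: fun_eq_iff dvd_div_mult_self)
    have ahB: "(ah, 0) \<in> Bk m" unfolding Bk_def ah_def using m az n_def d by auto
    have bhB: "(bh, 0) \<in> Bk m" unfolding Bk_def bh_def using m bz n_def d by auto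
    define Y :: "nat \<Rightarrow> mon \<Rightarrow> 'a" where "Y s = mul m (mul m (dlt (ah,0)) (dlt ((\<lambda>_. 0),s))) (dlt (bh,0))" for s
    have PW: "proj d (W t) = (if d dvd t then Y (t div d) else (\<lambda>_. 0))" if t: "t < n" for t
    proof (cases "d dvd t")
      case True
      define s where "s = t div d"
      have ts: "t = s * d" unfolding s_def using True by simp
      have sm: "s < m" using t ts d unfolding n_def by simp
      have sB: "((\<lambda>_. 0), s) \<in> Bk m" using sm unfolding Bk_def by simp
      have e1: "dlt (a,0) = iota d (dlt (ah,0) :: mon \<Rightarrow> 'a)" unfolding iota_dlt[OF d] imon_def using ah by simp
      have e2: "dlt ((\<lambda>_. 0),t) = iota d (dlt ((\<lambda>_. 0),s) :: mon \<Rightarrow> 'a)" unfolding iota_dlt[OF d] imon_def ts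
        by (simp add: spread_def)
      have e3: "dlt (b,0) = iota d (dlt (bh,0) :: mon \<Rightarrow> 'a)" unfolding iota_dlt[OF d] imon_def using bh by simp
      have A1: "(dlt (ah,0) :: mon \<Rightarrow> 'a) \<in> Alg m" by (rule dlt_Alg[OF ahB])
      have A2: "(dlt ((\<lambda>_. 0),s) :: mon \<Rightarrow> 'a) \<in> Alg m" by (rule dlt_Alg[OF sB])
      have A3: "(dlt (bh,0) :: mon \<Rightarrow> 'a) \<in> Alg m" by (rule dlt_Alg[OF bhB])
      have A12: "mul m (dlt (ah,0)) (dlt ((\<lambda>_. 0),s)) \<in> (Alg m :: (mon \<Rightarrow> 'a) set)" by (rule Alg_mul[OF A1 A2])
      have "W t = mul n (mul n (iota d (dlt (ah,0))) (iota d (dlt ((\<lambda>_. 0),s)))) (iota d (dlt (bh,0)))"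
        unfolding W_def e1 e2 e3 ..
      also have "\<dots> = mul n (iota d (mul m (dlt (ah,0)) (dlt ((\<lambda>_. 0),s)))) (iota d (dlt (bh,0)))"
        unfolding n_def by (subst iota_mul[OF d]) (use A1 A2 in \<open>auto simp: Alg_def\<close>)
      also have "\<dots> = iota d (Y s)"
        unfolding n_def Y_def by (subst iota_mul[OF d]) (use A12 A3 in \<open>auto simp: Alg_def\<close>)
      finally have "proj d (W t) = Y s" by (simp add: proj_iota[OF d])
      then show ?thesis using True s_def by simp
    next
      case False
      have nr: "\<not> (bmon n (a, t mod n) (b, 0) = imon d (sq d (bmon n (a, t mod n) (b, 0))))"
      proof
        assume "bmon n (a, t mod n) (b, 0) = imon d (sq d (bmon n (a, t mod n) (b, 0)))"
        then have "d dvd snd (bmon n (a, t mod n) (b, 0))" using imon_range by blast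
        then have "d dvd t" using t by (simp add: bmon_def)
        then show False using False by simp
      qed
      show ?thesis unfolding Wf using proj_sdlt[OF d nr] False by simp
    qed
    have PZ2: "proj d (mul n (mul n (dlt (a,0)) (e0 n)) (dlt (b,0))) = (\<lambda>y. \<Sum>s<m. inverse (of_nat n) * Y s y)"
    proof
      fix y
      have "(\<Sum>t<n. inverse (of_nat n) * proj d (W t) y) = (\<Sum>t<m*d. inverse (of_nat n) * (if d dvd t then Y (t div d) y else 0))"
        unfolding n_def[symmetric] by (rule sum.cong[OF refl]) (simp add: PW)
      also have "\<dots> = (\<Sum>s<m. inverse (of_nat n) * (if d dvd (s*d) then Y (s*d div d) y else 0))"
        by (rule sum_spread[OF d]) simp
      also have "\<dots> = (\<Sum>s<m. inverse (of_nat n) * Y s y)" using d by simp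
      finally show "proj d (mul n (mul n (dlt (a,0)) (e0 n)) (dlt (b,0))) y = (\<Sum>s<m. inverse (of_nat n) * Y s y)"
        unfolding PZ .
    qed
    define M :: "mon \<Rightarrow> 'a" where "M = mul m (mul m (dlt (ah,0)) (e0 m)) (dlt (bh,0))"
    have M: "M = (\<lambda>y. \<Sum>s<m. inverse (of_nat m) * Y s y)" unfolding M_def Y_def by (rule Zlin[OF m])
    have eA: "(e0 m :: mon \<Rightarrow> 'a) \<in> Alg m" by (rule e0_Alg[OF m])
    have MI: "M \<in> gen_ideal m (e0 m)" unfolding M_def
      by (intro gen_ideal.rmul gen_ideal.lmul gen_ideal.gen dlt_Alg ahB bhB)
    have "(\<lambda>y. (inverse (of_nat n) * of_nat m) * M y) \<in> gen_ideal m (e0 m)"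
      by (rule ideal_scale[OF m eA MI])
    also have "(\<lambda>y. (inverse (of_nat n) * of_nat m) * M y) = (\<lambda>y. \<Sum>s<m. inverse (of_nat n) * Y s y)"
    proof
      fix y
      have mz: "(of_nat m :: 'a) \<noteq> 0" using m by simp
      show "inverse (of_nat n) * of_nat m * M y = (\<Sum>s<m. inverse (of_nat n) * Y s y)"
        unfolding M by (simp only: sum_distrib_left[symmetric]) (use mz in \<open>simp add: field_simps\<close>)
    qed
    finally show ?thesis using PZ2 n_def by simp
  next
    case False
    have PW: "proj d (W t) = (\<lambda>_. 0)" if t: "t < n" for t
    proof -
      have nr: "\<not> (bmon n (a, t mod n) (b, 0) = imon d (sq d (bmon n (a, t mod n) (b, 0))))"
      proof
        assume "bmon n (a, t mod n) (b, 0) = imon d (sq d (bmon n (a, t mod n) (b, 0)))"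
        then have r: "(\<forall>i. \<not> d dvd i \<longrightarrow> fst (bmon n (a, t mod n) (b, 0)) i = 0) \<and> d dvd snd (bmon n (a, t mod n) (b, 0))"
          by (rule imon_range)
        have dt: "d dvd t" using r t by (simp add: bmon_def)
        have z: "\<And>i. \<not> d dvd i \<Longrightarrow> a i + rot n t b i = 0" using r t by (simp add: bmon_def)
        then have "\<forall>i. \<not> d dvd i \<longrightarrow> a i = 0" by simp
        then obtain i where i: "\<not> d dvd i" "b i \<noteq> 0" using False by blast
        have "i < n" using i bz by (meson not_le)
        then have ri: "rot n t b ((i + t) mod n) = b i" by (rule rot_pos)
        have "d dvd ((i + t) mod n) \<longleftrightarrow> d dvd (i + t)" using dn by (simp add: dvd_mod_iff)
        also have "\<dots> \<longleftrightarrow> d dvd i" using dt by (simp add: dvd_add_left_iff)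
        finally have "\<not> d dvd ((i + t) mod n)" using i by simp
        then have "a ((i + t) mod n) + rot n t b ((i + t) mod n) = 0" by (rule z)
        then show False using ri i by simp
      qed
      show ?thesis unfolding Wf by (rule proj_sdlt[OF d nr])
    qed
    have "proj d (mul n (mul n (dlt (a,0)) (e0 n)) (dlt (b,0))) = (\<lambda>_. 0::'a)"
    proof -
      have "(\<lambda>y. \<Sum>t<n. inverse (of_nat n) * proj d (W t) y) = (\<lambda>_. (0::'a))"
        by (rule ext, rule sum.neutral) (simp add: PW)
      then show ?thesis using PZ by simp
    qed
    then show ?thesis using n_def by (simp add: gen_ideal.zero)
  qed
qed

lemma fin_dlt: "finite (supp (dlt p :: mon \<Rightarrow> 'a::zero_neq_one))" by (simp add: supp_dlt)

lemma base_mono: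
  fixes m d :: nat
  assumes m: "m > 0" and d: "d > 0" and p: "p \<in> Bk (m*d)" and q: "q \<in> Bk (m*d)"
  shows "proj d (mul (m*d) (mul (m*d) (dlt p) (e0 (m*d))) (dlt q)) \<in> gen_ideal m (e0 m :: mon \<Rightarrow> 'a::field_char_0)"
proof -
  define n where "n = m*d"
  have n: "n > 0" using m d by (simp add: n_def)
  obtain a g where pp: "p = (a, g)" by fastforce
  obtain b h where qq: "q = (b, h)" by fastforce
  have gn: "g < n" and aB: "(a, 0) \<in> Bk n" using p n unfolding pp n_def Bk_def by auto
  have hn: "h < n" using q unfolding qq n_def Bk_def by auto
  obtain b' s where b': "(b', 0) \<in> Bk n" and s: "s = 1 \<or> s = -1"
    and qd: "(dlt (b, h) :: mon \<Rightarrow> 'a) = (\<lambda>x. s * mul n (dlt ((\<lambda>_. 0), h)) (dlt (b', 0)) x)"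
    using dlt_split_right[of b h n] q unfolding qq n_def by blast
  have eA0: "(e0 n :: mon \<Rightarrow> 'a) \<in> Alg n" by (rule e0_Alg[OF n])
  have eF: "finite (supp (e0 n :: mon \<Rightarrow> 'a))" using eA0 by (simp add: Alg_def)
  note fd = fin_dlt
  define X :: "mon \<Rightarrow> 'a" where "X = mul n (dlt (a, 0)) (e0 n)"
  have XF: "finite (supp X)" unfolding X_def by (intro finite_supp_mul fd eF)
  have pd: "(dlt (a, g) :: mon \<Rightarrow> 'a) = mul n (dlt (a, 0)) (dlt ((\<lambda>_. 0), g))"
  proof -
    have "mul n (dlt (a, 0)) (dlt ((\<lambda>_. 0), g)) = (dlt (a, g mod n) :: mon \<Rightarrow> 'a)" by (rule dlt_split_left)
    then show ?thesis using gn by simp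
  qed
  have L: "mul n (dlt (a, g)) (e0 n) = X"
  proof -
    have "mul n (dlt (a, g)) (e0 n) = mul n (mul n (dlt (a, 0)) (dlt ((\<lambda>_. 0), g))) (e0 n :: mon \<Rightarrow> 'a)"
      unfolding pd ..
    also have "\<dots> = mul n (dlt (a, 0)) (mul n (dlt ((\<lambda>_. 0), g)) (e0 n))"
      by (rule mul_assoc[OF n fd fd eF])
    also have "\<dots> = X" unfolding X_def dlt_left_e0[OF n] ..
    finally show ?thesis .
  qed
  have XR: "mul n X (dlt ((\<lambda>_. 0), h)) = X"
  proof -
    have "mul n X (dlt ((\<lambda>_. 0), h)) = mul n (dlt (a, 0)) (mul n (e0 n) (dlt ((\<lambda>_. 0), h)))"
      unfolding X_def by (rule mul_assoc[OF n fd eF fd])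
    also have "\<dots> = X" unfolding X_def dlt_right_e0[OF n] ..
    finally show ?thesis .
  qed
  have "mul n (mul n (dlt p) (e0 n)) (dlt q) = mul n X (\<lambda>x. s * mul n (dlt ((\<lambda>_. 0), h)) (dlt (b', 0)) x)"
    unfolding pp qq L qd ..
  also have "\<dots> = (\<lambda>y. s * mul n X (mul n (dlt ((\<lambda>_. 0), h)) (dlt (b', 0))) y)"
    by (rule mul_scale_right) (intro finite_supp_mul fd, rule XF)
  also have "mul n X (mul n (dlt ((\<lambda>_. 0), h)) (dlt (b', 0))) = mul n (mul n X (dlt ((\<lambda>_. 0), h))) (dlt (b', 0))"
    by (rule mul_assoc[OF n XF fd fd, symmetric])
  also have "\<dots> = mul n (mul n (dlt (a, 0)) (e0 n)) (dlt (b', 0))" by (simp only: XR) (simp add: X_def)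
  finally have E: "mul n (mul n (dlt p) (e0 n)) (dlt q) = (\<lambda>y. s * mul n (mul n (dlt (a, 0)) (e0 n)) (dlt (b', 0)) y)" .
  have Z: "proj d (mul n (mul n (dlt (a, 0)) (e0 n)) (dlt (b', 0))) \<in> gen_ideal m (e0 m :: mon \<Rightarrow> 'a)"
    unfolding n_def by (rule Zbase[OF m d]) (use aB b' n_def in auto)
  have "proj d (mul n (mul n (dlt p) (e0 n)) (dlt q)) = (\<lambda>y. s * proj d (mul n (mul n (dlt (a, 0)) (e0 n)) (dlt (b', 0))) y)"
    unfolding E proj_def ..
  also have "\<dots> \<in> gen_ideal m (e0 m)" by (rule ideal_scale[OF m e0_Alg[OF m] Z])
  finally show ?thesis unfolding n_def .
qed

lemma base_gen:
  fixes m d :: nat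
  assumes m: "m > 0" and d: "d > 0" and v: "v \<in> Alg (m*d)" and w: "w \<in> Alg (m*d)"
  shows "proj d (mul (m*d) (mul (m*d) v (e0 (m*d))) w) \<in> gen_ideal m (e0 m :: mon \<Rightarrow> 'a::field_char_0)"
proof -
  define n where "n = m*d"
  have n: "n > 0" using m d by (simp add: n_def)
  have vF: "finite (supp v)" and wF: "finite (supp w)" using v w by (auto simp: Alg_def)
  have vB: "supp v \<subseteq> Bk n" and wB: "supp w \<subseteq> Bk n" using v w by (auto simp: Alg_def n_def)
  have eA0: "(e0 n :: mon \<Rightarrow> 'a) \<in> Alg n" by (rule e0_Alg[OF n])
  have eF: "finite (supp (e0 n :: mon \<Rightarrow> 'a))" using eA0 by (simp add: Alg_def)
  note fd = fin_dlt
  have E1: "mul n v (e0 n) = (\<lambda>y. \<Sum>p\<in>supp v. v p * mul n (dlt p) (e0 n) y)"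
  proof
    fix y
    have "mul n v (e0 n) y = mul n (\<lambda>x. \<Sum>p\<in>supp v. v p * dlt p x) (e0 n) y"
      using dlt_decomp[OF vF] by metis
    also have "\<dots> = (\<Sum>p\<in>supp v. v p * mul n (dlt p) (e0 n) y)"
      by (rule mul_lin_left[OF vF vF _ eF]) (simp add: supp_dlt)
    finally show "mul n v (e0 n) y = (\<Sum>p\<in>supp v. v p * mul n (dlt p) (e0 n) y)" .
  qed
  have E2: "mul n (mul n (dlt p) (e0 n)) w y = (\<Sum>q\<in>supp w. w q * mul n (mul n (dlt p) (e0 n)) (dlt q) y)" for p y
  proof -
    have "mul n (mul n (dlt p) (e0 n)) w y = mul n (mul n (dlt p) (e0 n)) (\<lambda>x. \<Sum>q\<in>supp w. w q * dlt q x) y"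
      using dlt_decomp[OF wF] by metis
    also have "\<dots> = (\<Sum>q\<in>supp w. w q * mul n (mul n (dlt p) (e0 n)) (dlt q) y)"
      by (rule mul_lin_right[OF wF wF]) (auto simp: supp_dlt intro!: finite_supp_mul fd eF)
    finally show ?thesis .
  qed
  define U where "U p = (\<lambda>y. \<Sum>q\<in>supp w. w q * proj d (mul n (mul n (dlt p) (e0 n)) (dlt q)) y)" for p
  have "proj d (mul n (mul n v (e0 n)) w) = (\<lambda>y. \<Sum>p\<in>supp v. v p * U p y)"
  proof
    fix y
    have "mul n (mul n v (e0 n)) w (imon d y) = (\<Sum>p\<in>supp v. v p * mul n (mul n (dlt p) (e0 n)) w (imon d y))"
      unfolding E1
      by (rule mul_lin_left[where A="\<Union>p\<in>supp v. supp (mul n (dlt p) (e0 n) :: mon \<Rightarrow> 'a)"])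
         (auto intro!: finite_supp_mul fd eF wF vF)
    then show "proj d (mul n (mul n v (e0 n)) w) y = (\<Sum>p\<in>supp v. v p * U p y)"
      unfolding proj_def U_def E2 by simp
  qed
  also have "\<dots> \<in> gen_ideal m (e0 m)"
  proof (rule ideal_lin[OF m e0_Alg[OF m] vF], rule ballI)
    fix p assume p: "p \<in> supp v"
    show "U p \<in> gen_ideal m (e0 m)" unfolding U_def
    proof (rule ideal_lin[OF m e0_Alg[OF m] wF], rule ballI)
      fix q assume q: "q \<in> supp w"
      show "proj d (mul n (mul n (dlt p) (e0 n)) (dlt q)) \<in> gen_ideal m (e0 m :: mon \<Rightarrow> 'a)"
        unfolding n_def by (rule base_mono[OF m d]) (use p q vB wB n_def in auto)
    qed
  qed
  finally show ?thesis unfolding n_def .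
qed

lemma proj_ideal_inv:
  fixes m d :: nat
  assumes m: "m > 0" and d: "d > 0"
  shows "x \<in> gen_ideal (m*d) (e0 (m*d)) \<Longrightarrow> \<forall>v w. v \<in> (Alg (m*d) :: (mon \<Rightarrow> 'a) set) \<longrightarrow> w \<in> Alg (m*d) \<longrightarrow>
    proj d (mul (m*d) (mul (m*d) v x) w) \<in> gen_ideal m (e0 m :: mon \<Rightarrow> 'a::field_char_0)"
proof (induct rule: gen_ideal.induct)
  case gen
  then show ?case using base_gen[OF m d] by blast
next
  case zero
  show ?case by (simp add: mul_zero_left mul_zero_right proj_def gen_ideal.zero)
next
  case (add x y)
  have n: "m*d > 0" using m d by simp
  have eA: "(e0 (m*d) :: mon \<Rightarrow> 'a) \<in> Alg (m*d)" by (rule e0_Alg[OF n])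
  have xA: "x \<in> Alg (m*d)" by (rule ideal_Alg[OF eA add(1)])
  have yA: "y \<in> Alg (m*d)" by (rule ideal_Alg[OF eA add(3)])
  show ?case
  proof (intro allI impI)
    fix v w :: "mon \<Rightarrow> 'a" assume v: "v \<in> Alg (m*d)" and w: "w \<in> Alg (m*d)"
    have F: "finite (supp x)" "finite (supp y)" "finite (supp v)" "finite (supp w)"
      using xA yA v w by (auto simp: Alg_def)
    have "mul (m*d) (mul (m*d) v (\<lambda>p. x p + y p)) w = mul (m*d) (\<lambda>p. mul (m*d) v x p + mul (m*d) v y p) w"
      by (subst mul_add_right) (use F in auto)
    also have "\<dots> = (\<lambda>p. mul (m*d) (mul (m*d) v x) w p + mul (m*d) (mul (m*d) v y) w p)"
      by (rule mul_add_left) (use F in \<open>auto intro!: finite_supp_mul\<close>)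
    finally have e: "proj d (mul (m*d) (mul (m*d) v (\<lambda>p. x p + y p)) w) =
        (\<lambda>q. proj d (mul (m*d) (mul (m*d) v x) w) q + proj d (mul (m*d) (mul (m*d) v y) w) q)"
      by (simp add: proj_def)
    show "proj d (mul (m*d) (mul (m*d) v (\<lambda>p. x p + y p)) w) \<in> gen_ideal m (e0 m)"
      unfolding e using add v w by (intro gen_ideal.add) auto
  qed
next
  case (lmul x u)
  have n: "m*d > 0" using m d by simp
  have eA: "(e0 (m*d) :: mon \<Rightarrow> 'a) \<in> Alg (m*d)" by (rule e0_Alg[OF n])
  have xA: "x \<in> Alg (m*d)" by (rule ideal_Alg[OF eA lmul(1)])
  show ?case
  proof (intro allI impI)
    fix v w :: "mon \<Rightarrow> 'a" assume v: "v \<in> Alg (m*d)" and w: "w \<in> Alg (m*d)"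
    have e: "mul (m*d) v (mul (m*d) u x) = mul (m*d) (mul (m*d) v u) x"
      by (rule mul_assoc[OF n, symmetric]) (use xA v lmul(3) in \<open>auto simp: Alg_def\<close>)
    have vu: "mul (m*d) v u \<in> Alg (m*d)" by (rule Alg_mul[OF v lmul(3)])
    show "proj d (mul (m*d) (mul (m*d) v (mul (m*d) u x)) w) \<in> gen_ideal m (e0 m)"
      unfolding e using lmul(2) vu w by blast
  qed
next
  case (rmul x u)
  have n: "m*d > 0" using m d by simp
  have eA: "(e0 (m*d) :: mon \<Rightarrow> 'a) \<in> Alg (m*d)" by (rule e0_Alg[OF n])
  have xA: "x \<in> Alg (m*d)" by (rule ideal_Alg[OF eA rmul(1)])
  show ?case
  proof (intro allI impI)
    fix v w :: "mon \<Rightarrow> 'a" assume v: "v \<in> Alg (m*d)" and w: "w \<in> Alg (m*d)"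
    have vxA: "mul (m*d) v x \<in> Alg (m*d)" by (rule Alg_mul[OF v xA])
    have e1: "mul (m*d) v (mul (m*d) x u) = mul (m*d) (mul (m*d) v x) u"
      by (rule mul_assoc[OF n, symmetric]) (use xA v rmul(3) in \<open>auto simp: Alg_def\<close>)
    have e2: "mul (m*d) (mul (m*d) (mul (m*d) v x) u) w = mul (m*d) (mul (m*d) v x) (mul (m*d) u w)"
      by (rule mul_assoc[OF n]) (use vxA w rmul(3) in \<open>auto simp: Alg_def\<close>)
    have uw: "mul (m*d) u w \<in> Alg (m*d)" by (rule Alg_mul[OF rmul(3) w])
    show "proj d (mul (m*d) (mul (m*d) v (mul (m*d) x u)) w) \<in> gen_ideal m (e0 m)"
      unfolding e1 e2 using rmul(2) v uw by blast
  qed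
qed

lemma proj_ideal:
  fixes m d :: nat
  assumes m: "m > 0" and d: "d > 0" and x: "x \<in> gen_ideal (m*d) (e0 (m*d))"
  shows "proj d x \<in> gen_ideal m (e0 m :: mon \<Rightarrow> 'a::field_char_0)"
proof -
  have n: "m*d > 0" using m d by simp
  have eA: "(e0 (m*d) :: mon \<Rightarrow> 'a) \<in> Alg (m*d)" by (rule e0_Alg[OF n])
  have xA: "x \<in> Alg (m*d)" by (rule ideal_Alg[OF eA x])
  have oA: "(one :: mon \<Rightarrow> 'a) \<in> Alg (m*d)" by (rule one_Alg[OF n])
  have "proj d (mul (m*d) (mul (m*d) one x) one) \<in> gen_ideal m (e0 m :: mon \<Rightarrow> 'a)"
    using proj_ideal_inv[OF m d x] oA by blast
  moreover have "mul (m*d) (mul (m*d) one x) one = x"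
    using xA by (simp add: Alg_def mul_one_left mul_one_right)
  ultimately show ?thesis by simp
qed

lemma growth_mono:
  assumes le: "\<And>j. d1 j \<le> d2 j"
  shows "growth d1 \<le> growth d2"
  unfolding growth_def
proof (rule Limsup_mono)
  show "\<forall>\<^sub>F j in sequentially. (case d1 j of enat x \<Rightarrow> ereal (ln (real x) / ln (real j)) | \<infinity> \<Rightarrow> \<infinity>)
      \<le> (case d2 j of enat x \<Rightarrow> ereal (ln (real x) / ln (real j)) | \<infinity> \<Rightarrow> \<infinity>)"
  proof (rule eventually_sequentiallyI[of 2])
    fix j :: nat assume j: "2 \<le> j"
    have lj: "ln (real j) > 0" using j by simp
    show "(case d1 j of enat x \<Rightarrow> ereal (ln (real x) / ln (real j)) | \<infinity> \<Rightarrow> \<infinity>)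
      \<le> (case d2 j of enat x \<Rightarrow> ereal (ln (real x) / ln (real j)) | \<infinity> \<Rightarrow> \<infinity>)"
    proof (cases "d2 j")
      case infinity then show ?thesis by simp
    next
      case (enat b)
      then obtain a where a: "d1 j = enat a" "a \<le> b" using le[of j] by (cases "d1 j") auto
      have "ln (real a) \<le> ln (real b)"
      proof (cases "a = 0")
        case True
        then show ?thesis using a by (cases "b = 0") auto
      next
        case False
        then show ?thesis using a by simp
      qed
      then have "ln (real a) / ln (real j) \<le> ln (real b) / ln (real j)" using lj by (simp add: divide_right_mono)
      then show ?thesis using a enat by simp
    qed
  qed
qed

lemma qdim_mono:
  fixes m d :: nat and W :: "(mon \<Rightarrow> 'a::field_char_0) set"
  assumes m: "m > 0" and d: "d > 0" and WA: "\<And>s. s \<in> W \<Longrightarrow> iota d s \<in> W'"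
  shows "qdim (gen_ideal m (e0 m)) W \<le> qdim (gen_ideal (m*d) (e0 (m*d))) W'"
  unfolding qdim_def
proof (rule SUP_mono)
  fix S assume S: "S \<in> {S. finite S \<and> S \<subseteq> W \<and> indep_mod (gen_ideal m (e0 m)) S}"
  have inj: "inj_on (iota d) S" by (rule inj_on_inverseI[where g="proj d"]) (simp add: proj_iota[OF d])
  have fin: "finite (iota d ` S)" using S by simp
  have sub: "iota d ` S \<subseteq> W'" using S WA by auto
  have ind: "indep_mod (gen_ideal (m*d) (e0 (m*d))) (iota d ` S)"
    unfolding indep_mod_def
  proof (intro allI impI)
    fix c assume c: "(\<lambda>p. \<Sum>s\<in>iota d ` S. c s * s p) \<in> gen_ideal (m*d) (e0 (m*d))"
    have "proj d (\<lambda>p. \<Sum>s\<in>iota d ` S. c s * s p) \<in> gen_ideal m (e0 m :: mon \<Rightarrow> 'a)"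
      by (rule proj_ideal[OF m d c])
    also have "proj d (\<lambda>p. \<Sum>s\<in>iota d ` S. c s * s p) = (\<lambda>p. \<Sum>s\<in>S. c (iota d s) * s p)"
    proof
      fix q
      have "proj d (\<lambda>p. \<Sum>s\<in>iota d ` S. c s * s p) q = (\<Sum>s\<in>iota d ` S. c s * proj d s q)"
        unfolding proj_def ..
      also have "\<dots> = (\<Sum>s\<in>S. c (iota d s) * proj d (iota d s) q)"
        by (simp add: sum.reindex[OF inj])
      also have "\<dots> = (\<Sum>s\<in>S. c (iota d s) * s q)" by (simp add: proj_iota[OF d])
      finally show "proj d (\<lambda>p. \<Sum>s\<in>iota d ` S. c s * s p) q = (\<Sum>s\<in>S. c (iota d s) * s q)" .
    qed
    finally have "(\<lambda>p. \<Sum>s\<in>S. c (iota d s) * s p) \<in> gen_ideal m (e0 m)" .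
    note X = this
    have Si: "indep_mod (gen_ideal m (e0 m)) S" using S by simp
    have z: "\<forall>s\<in>S. c (iota d s) = 0"
      using Si[unfolded indep_mod_def, rule_format, of "\<lambda>s. c (iota d s)"] X by blast
    show "\<forall>s\<in>iota d ` S. c s = 0" using z by auto
  qed
  have "card (iota d ` S) = card S" by (rule card_image[OF inj])
  then show "\<exists>S'\<in>{S. finite S \<and> S \<subseteq> W' \<and> indep_mod (gen_ideal (m*d) (e0 (m*d))) S}. enat (card S) \<le> enat (card S')"
    using fin sub ind by (intro bexI[of _ "iota d ` S"]) auto
qed

lemma GK_mono:
  fixes m d :: nat
  assumes m: "m > 0" and d: "d > 0"
  shows "GKdim_E TYPE('a::field_char_0) m \<le> GKdim_E TYPE('a) (m*d)"
  unfolding GKdim_E_def GKdim_quot_def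
proof (rule SUP_mono)
  fix F assume F: "F \<in> {F. finite F \<and> F \<subseteq> (Alg m :: (mon \<Rightarrow> 'a) set)}"
  have FA: "F \<subseteq> (Alg m :: (mon \<Rightarrow> 'a) set)" using F by simp
  have F': "iota d ` F \<in> {F. finite F \<and> F \<subseteq> (Alg (m*d) :: (mon \<Rightarrow> 'a) set)}"
    using F iota_Alg[OF d] by auto
  have "growth (\<lambda>j. qdim (gen_ideal m (e0 m :: mon \<Rightarrow> 'a)) (filt m F j)) \<le>
        growth (\<lambda>j. qdim (gen_ideal (m*d) (e0 (m*d) :: mon \<Rightarrow> 'a)) (filt (m*d) (iota d ` F) j))"
    by (rule growth_mono, rule qdim_mono[OF m d], rule iota_filt[OF d m FA])
  then show "\<exists>F'\<in>{F. finite F \<and> F \<subseteq> (Alg (m*d) :: (mon \<Rightarrow> 'a) set)}.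
      growth (\<lambda>j. qdim (gen_ideal m (e0 m :: mon \<Rightarrow> 'a)) (filt m F j)) \<le>
      growth (\<lambda>j. qdim (gen_ideal (m*d) (e0 (m*d) :: mon \<Rightarrow> 'a)) (filt (m*d) F' j))"
    using F' by blast
qed

theorem lemma3p7:
  fixes m n :: nat
  assumes alg_closed: "\<forall>p :: 'a::field_char_0 poly. degree p > 0 \<longrightarrow> (\<exists>x. poly p x = 0)"
    and "2 \<le> m" and "2 \<le> n" and "m dvd n"
  shows "GKdim_E TYPE('a) n \<ge> GKdim_E TYPE('a) m"
proof -
  obtain d where nd: "n = m * d" using assms(4) by (auto simp: dvd_def)
  have m: "m > 0" using assms(2) by simp
  have d: "d > 0" using nd assms(3) by (cases d) auto
  show ?thesis unfolding nd using GK_mono[OF m d] by simp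
qed

end
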